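(* Suppose $\frac{p\sqrt[4]{n}}{\ln n}\to\infty$ and $q\ln n\to\infty$ as $n\to\infty$, where $q=1-p$. Then for every $\varepsilon>0$ there exists $n_0$ such that for all $n\ge n_0$, both $u_2(n,p)$ and $u_2'(n,p)$ are at least $$\left(2-\varepsilon+\frac{4\ln p}{\ln(np)}\right)\log_{\frac{1}{1-p}}(np).$$
   Context: $G(n,p)$ is the Erdős–Rényi random graph on $n$ labelled vertices (vertex set $V$), each edge present independently with probability $p=p(n)$; $\mathbb{P}_{n,p}$ is the corresponding probability and $q=1-p$. A diameter graph in $\mathbb{R}^d$ is a graph $(V,E)$ with $V\subset\mathbb{R}^d$ finite and $E=\{\{\mathbf{x},\mathbf{y}\}\subseteq V: |\mathbf{x}-\mathbf{y}|=\operatorname{diam}V\}$, where $\operatorname{diam}V=\max_{\mathbf{x},\mathbf{y}\in V}|\mathbf{x}-\mathbf{y}|$ (Euclidean norm); a graph is a diameter graph in $\mathbb{R}^d$ if it is isomorphic to one. $u_d(n,p)$ is the largest positive integer $k$ such that $\mathbb{P}_{n,p}\big(\exists W\subseteq V,\ |W|=k,\ G[W]$ is a diameter graph in $\mathbb{R}^d$ and $\chi(G[W])=d+1\big)>\frac12$, where $G[W]$ is the induced subgraph; if no such $k$ exists, $u_d(n,p)=0$. $u_d'(n,p)$ is defined identically with the additional requirement that $G[W]$ be connected. *)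

theory Defs
  imports "HOL-Analysis.Analysis"
begin

text \<open>Random graph G(n,p) on vertex set {0..<n}; a graph is given by its edge set,
  a set of 2-element subsets of the vertex set.\<close>

definition all_pairs :: "nat \<Rightarrow> nat set set" where
  "all_pairs n = {e. \<exists>x y. x < n \<and> y < n \<and> x \<noteq> y \<and> e = {x, y}}"

definition prob_gnp :: "nat \<Rightarrow> real \<Rightarrow> (nat set set \<Rightarrow> bool) \<Rightarrow> real" where
  "prob_gnp n p A =
     (\<Sum>E\<in>Pow (all_pairs n).
        if A E then p ^ card E * (1 - p) ^ (card (all_pairs n) - card E) else 0)"

definition is_diameter_graph_R2 :: "nat set \<Rightarrow> nat set set \<Rightarrow> bool" where
  "is_diameter_graph_R2 W E \<longleftrightarrow>
     (\<exists>f :: nat \<Rightarrow> real^2. inj_on f W \<and>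
        (\<forall>x\<in>W. \<forall>y\<in>W. ({x, y} \<in> E \<longleftrightarrow>
            (x \<noteq> y \<and> dist (f x) (f y) = diameter (f ` W)))))"

definition chromatic_number :: "nat set \<Rightarrow> nat set set \<Rightarrow> nat" where
  "chromatic_number W E =
     (LEAST k. \<exists>c :: nat \<Rightarrow> nat. (\<forall>x\<in>W. c x < k) \<and>
        (\<forall>x\<in>W. \<forall>y\<in>W. {x, y} \<in> E \<longrightarrow> c x \<noteq> c y))"

definition connected_induced :: "nat set \<Rightarrow> nat set set \<Rightarrow> bool" where
  "connected_induced W E \<longleftrightarrow>
     (\<forall>x\<in>W. \<forall>y\<in>W. (\<lambda>a b. a \<in> W \<and> b \<in> W \<and> {a, b} \<in> E)\<^sup>*\<^sup>* x y)"

definition u2 :: "nat \<Rightarrow> real \<Rightarrow> nat" where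
  "u2 n p = Max ({k. 0 < k \<and> prob_gnp n p (\<lambda>E. \<exists>W \<subseteq> {..<n}. card W = k \<and>
        is_diameter_graph_R2 W E \<and> chromatic_number W E = 3) > 1/2} \<union> {0})"

definition u2' :: "nat \<Rightarrow> real \<Rightarrow> nat" where
  "u2' n p = Max ({k. 0 < k \<and> prob_gnp n p (\<lambda>E. \<exists>W \<subseteq> {..<n}. card W = k \<and>
        is_diameter_graph_R2 W E \<and> chromatic_number W E = 3 \<and>
        connected_induced W E) > 1/2} \<union> {0})"

end

theory Submission
  imports Defs
begin

definition circ :: "real \<Rightarrow> real^2" where "circ t = vector [cos t, sin t]"

lemma normsq2: "(norm (v::real^2))^2 = (v$1)^2 + (v$2)^2"
  unfolding power2_norm_eq_inner inner_vec_def sum_2 by (simp add: power2_eq_square)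

lemma dist_circ_sq: "(dist (circ a) (circ b))^2 = 2 - 2*cos(a-b)"
proof -
  have "(dist (circ a) (circ b))^2 = (cos a - cos b)^2 + (sin a - sin b)^2"
    unfolding dist_norm normsq2 by (simp add: circ_def)
  also have "\<dots> = 2 - 2*cos(a-b)"
    by (simp add: cos_diff power2_eq_square algebra_simps)
  finally show ?thesis .
qed

lemma dist0_circ: "dist 0 (circ a) = 1"
proof -
  have "(dist 0 (circ a))^2 = 1"
    unfolding dist_norm normsq2 by (simp add: circ_def)
  then show ?thesis by (smt (verit) power2_eq_1_iff zero_le_dist)
qed

lemma cos_abs_gt: assumes "\<bar>d\<bar> < pi/3" shows "cos d > 1/2"
proof -
  have "cos d = cos \<bar>d\<bar>" by (simp add: abs_real_def)
  also have "cos \<bar>d\<bar> > cos (pi/3)"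
    by (rule cos_monotone_0_pi) (use assms in auto)
  finally show ?thesis by (simp add: cos_60)
qed

lemma dist_circ_lt: assumes "\<bar>a - b\<bar> < pi/3" shows "dist (circ a) (circ b) < 1"
proof -
  have "(dist (circ a) (circ b))^2 < 1" using dist_circ_sq[of a b] cos_abs_gt[OF assms] by simp
  then show ?thesis by (smt (verit) one_le_power zero_le_dist)
qed

lemma dist_circ_eq: assumes "\<bar>a - b\<bar> = pi/3" shows "dist (circ a) (circ b) = 1"
proof -
  have "cos (a - b) = 1/2"
    using assms by (metis abs_real_def cos_60 cos_minus)
  then have "(dist (circ a) (circ b))^2 = 1" using dist_circ_sq[of a b] by simp
  then show ?thesis by (smt (verit) power2_eq_1_iff zero_le_dist)
qed

definition th :: "nat \<Rightarrow> real" where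
  "th i = (if i = 1 then 0 else if i = 2 then pi/3 else pi/(3*i))"

definition pt :: "nat \<Rightarrow> real^2" where
  "pt i = (if i = 0 then 0 else circ (th i))"

definition hedge :: "nat \<Rightarrow> nat \<Rightarrow> bool" where
  "hedge i j \<longleftrightarrow> i \<noteq> j \<and> (i = 0 \<or> j = 0 \<or> {i,j} = {1,2})"

lemma th_small: assumes "i \<ge> 3" shows "0 < th i" "th i \<le> pi/9"
proof -
  have "th i = pi/(3*i)" using assms by (simp add: th_def)
  moreover have "pi/(3*i) \<le> pi/9" using assms pi_gt_zero
    by (intro divide_left_mono) auto
  ultimately show "0 < th i" "th i \<le> pi/9" using assms pi_gt_zero by auto
qed

lemma th12[simp]: "th 1 = 0" "th (Suc 0) = 0" "th 2 = pi/3" by (auto simp: th_def)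

lemma circ_ne0: "circ a \<noteq> 0" using dist0_circ[of a] by auto

lemma th_inj: assumes "i \<ge> 3" "j \<ge> 3" "th i = th j" shows "i = j"
  using assms pi_gt_zero by (auto simp: th_def)

lemma th_diff: assumes "i \<ge> 1" "j \<ge> 1" "i \<noteq> j"
  shows "(\<bar>th i - th j\<bar> = pi/3 \<and> {i,j} = {1,2}) \<or> (\<bar>th i - th j\<bar> < pi/3 \<and> {i,j} \<noteq> {1,2} \<and> th i \<noteq> th j)"
proof -
  have p: "pi > 0" by (rule pi_gt_zero)
  consider "i = 1" | "i = 2" | "i \<ge> 3" using assms by linarith
  then show ?thesis
  proof cases
    case 1
    then consider "j = 2" | "j \<ge> 3" using assms by linarith
    then show ?thesis
    proof cases
      case 1 thus ?thesis using \<open>i=1\<close> p by simp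
    next
      case 2 thus ?thesis using \<open>i=1\<close> th_small[OF 2] p by (auto simp: doubleton_eq_iff)
    qed
  next
    case 2
    then consider "j = 1" | "j \<ge> 3" using assms by linarith
    then show ?thesis
    proof cases
      case 1 thus ?thesis using \<open>i=2\<close> p by auto
    next
      case 3: 2 thus ?thesis using \<open>i=2\<close> th_small[OF 3] p by (auto simp: doubleton_eq_iff)
    qed
  next
    case 3
    consider "j = 1" | "j = 2" | "j \<ge> 3" using assms by linarith
    then show ?thesis
    proof cases
      case 1 thus ?thesis using th_small[OF 3] p by (auto simp: doubleton_eq_iff)
    next
      case 2 thus ?thesis using th_small[OF 3] p by (auto simp: doubleton_eq_iff)
    next
      case 4: 3 thus ?thesis using th_small[OF 3] th_small[OF 4] p th_inj[OF 3 4] assms(3)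
        by (auto simp: doubleton_eq_iff abs_if)
    qed
  qed
qed

lemma circ_inj: assumes "circ a = circ b" "\<bar>a - b\<bar> < pi/3" shows "a = b"
proof -
  have "cos (a - b) = 1" using dist_circ_sq[of a b] assms(1) by simp
  have "cos (b-a) = cos (a-b)" by (metis cos_minus minus_diff_eq)
  then have "cos \<bar>a - b\<bar> = 1" using \<open>cos (a-b) = 1\<close> by (simp add: abs_real_def)
  show ?thesis
  proof (rule ccontr)
    assume "a \<noteq> b"
    then have "cos \<bar>a - b\<bar> < cos 0" by (intro cos_monotone_0_pi) (use assms pi_gt_zero abs_ge_zero[of "a-b"] in linarith)+
    then show False using \<open>cos \<bar>a - b\<bar> = 1\<close> by simp
  qed
qed

lemma pt_props: assumes "i \<noteq> j"
  shows "dist (pt i) (pt j) \<le> 1" "dist (pt i) (pt j) = 1 \<longleftrightarrow> hedge i j" "pt i \<noteq> pt j"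
proof -
  have "(dist (pt i) (pt j) \<le> 1) \<and> (dist (pt i) (pt j) = 1 \<longleftrightarrow> hedge i j) \<and> pt i \<noteq> pt j"
  proof (cases "i = 0 \<or> j = 0")
    case True
    then show ?thesis using assms dist0_circ circ_ne0
      by (auto simp: pt_def hedge_def dist_commute)
  next
    case False
    then have ij: "i \<ge> 1" "j \<ge> 1" by auto
    from th_diff[OF ij assms] show ?thesis
    proof
      assume "\<bar>th i - th j\<bar> = pi/3 \<and> {i,j} = {1,2}"
      then show ?thesis using dist_circ_eq[of "th i" "th j"] False assms
        by (auto simp: pt_def hedge_def)
    next
      assume h: "\<bar>th i - th j\<bar> < pi/3 \<and> {i,j} \<noteq> {1,2} \<and> th i \<noteq> th j"
      then show ?thesis using dist_circ_lt[of "th i" "th j"] circ_inj[of "th i" "th j"] False assms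
        by (auto simp: pt_def hedge_def)
    qed
  qed
  then show "dist (pt i) (pt j) \<le> 1" "dist (pt i) (pt j) = 1 \<longleftrightarrow> hedge i j" "pt i \<noteq> pt j" by auto
qed

lemma graph_struct:
  fixes \<phi> :: "nat \<Rightarrow> nat" and E :: "nat set set"
  assumes k3: "3 \<le> k" and inj: "inj_on \<phi> {..<k}"
    and edges: "\<And>i j. i<k \<Longrightarrow> j<k \<Longrightarrow> ({\<phi> i, \<phi> j} \<in> E \<longleftrightarrow> hedge i j)"
  shows "is_diameter_graph_R2 (\<phi>`{..<k}) E \<and> chromatic_number (\<phi>`{..<k}) E = 3
     \<and> connected_induced (\<phi>`{..<k}) E"
proof -
  define K where "K = {..<k}"
  define W where "W = \<phi> ` K"
  define g where "g = inv_into K \<phi>"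
  have gphi: "\<And>i. i \<in> K \<Longrightarrow> g (\<phi> i) = i" unfolding g_def using inj K_def by (simp add: inv_into_f_f)
  have Wcases: "\<And>x. x \<in> W \<Longrightarrow> \<exists>i\<in>K. x = \<phi> i" unfolding W_def by auto
  define f where "f = pt \<circ> g"
  have fW: "f ` W = pt ` K" unfolding f_def W_def by (force simp: gphi image_iff)
  have diam: "diameter (f ` W) = 1"
  proof (rule antisym)
    show "diameter (f ` W) \<le> 1" unfolding fW
      by (rule diameter_le) (auto simp: dist_norm[symmetric], metis dist_self pt_props(1) zero_le_one)
  next
    have "bounded (pt ` K)" unfolding K_def by (intro finite_imp_bounded) auto
    moreover have "pt 0 \<in> pt ` K" "pt 1 \<in> pt ` K" using k3 unfolding K_def by auto
    ultimately have "dist (pt 0) (pt 1) \<le> diameter (pt ` K)" by (rule diameter_bounded_bound)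
    moreover have "dist (pt 0) (pt 1) = 1" using pt_props(2)[of 0 1] by (simp add: hedge_def)
    ultimately show "1 \<le> diameter (f ` W)" unfolding fW by simp
  qed
  have D: "is_diameter_graph_R2 W E"
    unfolding is_diameter_graph_R2_def
  proof (intro exI[of _ f] conjI ballI)
    show "inj_on f W"
    proof (rule inj_onI)
      fix x y assume "x \<in> W" "y \<in> W" "f x = f y"
      then obtain i j where "i\<in>K" "j\<in>K" "x = \<phi> i" "y = \<phi> j" using Wcases by blast
      then show "x = y" using \<open>f x = f y\<close> pt_props(3)[of i j] by (auto simp: f_def gphi)
    qed
  next
    fix x y assume "x \<in> W" "y \<in> W"
    then obtain i j where ij: "i\<in>K" "j\<in>K" "x = \<phi> i" "y = \<phi> j" using Wcases by blast
    have "{x,y} \<in> E \<longleftrightarrow> hedge i j" using edges ij unfolding K_def by auto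
    also have "\<dots> \<longleftrightarrow> (x \<noteq> y \<and> dist (f x) (f y) = diameter (f ` W))"
    proof (cases "i = j")
      case True then show ?thesis using ij by (simp add: hedge_def)
    next
      case False
      then have "x \<noteq> y" using ij inj unfolding K_def by (auto dest: inj_onD)
      then show ?thesis using pt_props(2)[OF False] ij diam by (simp add: f_def gphi)
    qed
    finally show "{x,y} \<in> E \<longleftrightarrow> (x \<noteq> y \<and> dist (f x) (f y) = diameter (f ` W))" .
  qed
  define col :: "nat \<Rightarrow> nat" where "col i = (if i = 0 then 0 else if i = 2 then 2 else 1)" for i
  have P3: "\<exists>c :: nat \<Rightarrow> nat. (\<forall>x\<in>W. c x < 3) \<and> (\<forall>x\<in>W. \<forall>y\<in>W. {x, y} \<in> E \<longrightarrow> c x \<noteq> c y)"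
  proof (intro exI[of _ "col \<circ> g"] conjI ballI impI)
    fix x assume "x \<in> W" then show "(col \<circ> g) x < 3" by (auto simp: col_def)
  next
    fix x y assume "x \<in> W" "y \<in> W" "{x,y} \<in> E"
    then obtain i j where ij: "i\<in>K" "j\<in>K" "x = \<phi> i" "y = \<phi> j" using Wcases by blast
    then have "hedge i j" using edges \<open>{x,y} \<in> E\<close> unfolding K_def by auto
    then show "(col \<circ> g) x \<noteq> (col \<circ> g) y" using ij
      by (auto simp: gphi col_def hedge_def doubleton_eq_iff)
  qed
  have notP: "\<not> (\<exists>c :: nat \<Rightarrow> nat. (\<forall>x\<in>W. c x < m) \<and> (\<forall>x\<in>W. \<forall>y\<in>W. {x, y} \<in> E \<longrightarrow> c x \<noteq> c y))"
    if "m < 3" for m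
  proof
    assume "\<exists>c :: nat \<Rightarrow> nat. (\<forall>x\<in>W. c x < m) \<and> (\<forall>x\<in>W. \<forall>y\<in>W. {x, y} \<in> E \<longrightarrow> c x \<noteq> c y)"
    then obtain c :: "nat \<Rightarrow> nat" where c: "\<forall>x\<in>W. c x < m" "\<forall>x\<in>W. \<forall>y\<in>W. {x, y} \<in> E \<longrightarrow> c x \<noteq> c y" by blast
    have in3: "\<phi> 0 \<in> W" "\<phi> 1 \<in> W" "\<phi> 2 \<in> W" using k3 unfolding W_def K_def by auto
    have e: "{\<phi> 0, \<phi> 1} \<in> E" "{\<phi> 0, \<phi> 2} \<in> E" "{\<phi> 1, \<phi> 2} \<in> E"
      using edges[of 0 1] edges[of 0 2] edges[of 1 2] k3 by (auto simp: hedge_def)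
    have "c (\<phi> 0) \<noteq> c (\<phi> 1)" "c (\<phi> 0) \<noteq> c (\<phi> 2)" "c (\<phi> 1) \<noteq> c (\<phi> 2)"
      using c(2) in3 e by blast+
    moreover have "c (\<phi> 0) < 2" "c (\<phi> 1) < 2" "c (\<phi> 2) < 2" using c(1) in3 that by fastforce+
    ultimately show False by linarith
  qed
  have C: "chromatic_number W E = 3"
    unfolding chromatic_number_def
  proof (rule Least_equality)
    show "\<exists>c :: nat \<Rightarrow> nat. (\<forall>x\<in>W. c x < 3) \<and> (\<forall>x\<in>W. \<forall>y\<in>W. {x, y} \<in> E \<longrightarrow> c x \<noteq> c y)" by (rule P3)
  next
    fix m :: nat assume "\<exists>c :: nat \<Rightarrow> nat. (\<forall>x\<in>W. c x < m) \<and> (\<forall>x\<in>W. \<forall>y\<in>W. {x, y} \<in> E \<longrightarrow> c x \<noteq> c y)"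
    then show "3 \<le> m" using notP[of m] by (meson not_le)
  qed
  have Con: "connected_induced W E"
    unfolding connected_induced_def
  proof (intro ballI)
    fix x y assume "x \<in> W" "y \<in> W"
    then obtain i j where ij: "i\<in>K" "j\<in>K" "x = \<phi> i" "y = \<phi> j" using Wcases by blast
    let ?R = "\<lambda>a b. a \<in> W \<and> b \<in> W \<and> {a, b} \<in> E"
    have w0: "\<phi> 0 \<in> W" using k3 unfolding W_def K_def by auto
    have s1: "?R\<^sup>*\<^sup>* x (\<phi> 0)"
    proof (cases "i = 0")
      case True then show ?thesis using ij by simp
    next
      case False
      then have "{\<phi> i, \<phi> 0} \<in> E" using edges[of i 0] ij k3 unfolding K_def by (auto simp: hedge_def)
      then show ?thesis using ij w0 \<open>x \<in> W\<close> by (auto intro: r_into_rtranclp)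
    qed
    have s2: "?R\<^sup>*\<^sup>* (\<phi> 0) y"
    proof (cases "j = 0")
      case True then show ?thesis using ij by simp
    next
      case False
      then have "{\<phi> 0, \<phi> j} \<in> E" using edges[of 0 j] ij k3 unfolding K_def by (auto simp: hedge_def)
      then show ?thesis using ij w0 \<open>y \<in> W\<close> by (auto intro: r_into_rtranclp)
    qed
    show "?R\<^sup>*\<^sup>* x y" using s1 s2 by (rule rtranclp_trans)
  qed
  show ?thesis using D C Con unfolding W_def K_def by simp
qed

lemma binom_pow_sum:
  fixes p q :: real
  assumes "finite R"
  shows "(\<Sum>B\<in>Pow R. p ^ card B * q ^ (card R - card B)) = (p + q) ^ card R"
  using assms
proof (induction R rule: finite_induct)
  case empty then show ?case by simp
next
  case (insert x R)
  have fin: "finite (Pow R)" using insert by simp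
  have disj: "Pow R \<inter> insert x ` Pow R = {}" using insert by auto
  have inj: "inj_on (insert x) (Pow R)" unfolding inj_on_def
    by (intro ballI impI) (metis Diff_insert_absorb PowD subsetD insert.hyps(2))
  have c: "\<And>B. B \<in> Pow R \<Longrightarrow> card (insert x B) = Suc (card B)"
    using insert by (meson PowD card_insert_disjoint finite_subset subsetD)
  have cB: "\<And>B. B \<in> Pow R \<Longrightarrow> card B \<le> card R"
    using insert by (simp add: card_mono)
  have "(\<Sum>B\<in>Pow (insert x R). p ^ card B * q ^ (card (insert x R) - card B))
      = (\<Sum>B\<in>Pow R. p ^ card B * q ^ (Suc (card R) - card B))
        + (\<Sum>B\<in>insert x ` Pow R. p ^ card B * q ^ (Suc (card R) - card B))"
    unfolding Pow_insert using insert disj fin by (simp add: sum.union_disjoint)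
  also have "(\<Sum>B\<in>insert x ` Pow R. p ^ card B * q ^ (Suc (card R) - card B))
      = (\<Sum>B\<in>Pow R. p ^ Suc (card B) * q ^ (Suc (card R) - Suc (card B)))"
    by (subst sum.reindex[OF inj]) (auto simp: c intro: sum.cong)
  also have "(\<Sum>B\<in>Pow R. p ^ card B * q ^ (Suc (card R) - card B))
      = q * (\<Sum>B\<in>Pow R. p ^ card B * q ^ (card R - card B))"
    by (auto simp: sum_distrib_left Suc_diff_le cB intro!: sum.cong)
  also have "(\<Sum>B\<in>Pow R. p ^ Suc (card B) * q ^ (Suc (card R) - Suc (card B)))
      = p * (\<Sum>B\<in>Pow R. p ^ card B * q ^ (card R - card B))"
    by (auto simp: sum_distrib_left intro!: sum.cong)
  finally show ?case using insert by (simp add: algebra_simps)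
qed

lemma marginal:
  fixes p q :: real
  assumes U: "finite U" and S: "S \<subseteq> U" and A: "A \<subseteq> S"
  shows "(\<Sum>E\<in>Pow U. if E \<inter> S = A then p ^ card E * q ^ (card U - card E) else 0)
       = p ^ card A * q ^ card (S - A) * (p + q) ^ card (U - S)"
proof -
  have finS: "finite S" using U S finite_subset by blast
  have finA: "finite A" using finS A finite_subset by blast
  have eq: "{E \<in> Pow U. E \<inter> S = A} = (\<lambda>B. A \<union> B) ` Pow (U - S)"
  proof
    show "{E \<in> Pow U. E \<inter> S = A} \<subseteq> (\<lambda>B. A \<union> B) ` Pow (U - S)"
    proof
      fix E assume "E \<in> {E \<in> Pow U. E \<inter> S = A}"
      then have "E = A \<union> (E - S)" "E - S \<in> Pow (U - S)" by auto
      then show "E \<in> (\<lambda>B. A \<union> B) ` Pow (U - S)" by blast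
    qed
  next
    show "(\<lambda>B. A \<union> B) ` Pow (U - S) \<subseteq> {E \<in> Pow U. E \<inter> S = A}" using A S by auto
  qed
  have inj: "inj_on (\<lambda>B. A \<union> B) (Pow (U - S))"
    unfolding inj_on_def using A by blast
  have finU': "finite (U - S)" using U by simp
  have cardU: "card U = card S + card (U - S)"
    using U S by (metis card_Diff_subset card_mono diff_add_inverse le_add_diff_inverse finS)
  have cardS: "card S = card A + card (S - A)"
    using finS A by (metis card_Diff_subset card_mono le_add_diff_inverse finA)
  have "(\<Sum>E\<in>Pow U. if E \<inter> S = A then p ^ card E * q ^ (card U - card E) else 0)
      = (\<Sum>E\<in>{E \<in> Pow U. E \<inter> S = A}. p ^ card E * q ^ (card U - card E))"
    by (rule sum.inter_filter[symmetric]) (use U in simp)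
  also have "\<dots> = (\<Sum>B\<in>Pow (U - S). p ^ card (A \<union> B) * q ^ (card U - card (A \<union> B)))"
    unfolding eq by (subst sum.reindex[OF inj]) simp
  also have "\<dots> = (\<Sum>B\<in>Pow (U - S). (p ^ card A * q ^ card (S - A)) * (p ^ card B * q ^ (card (U - S) - card B)))"
  proof (rule sum.cong)
    fix B assume B: "B \<in> Pow (U - S)"
    have finB: "finite B" using B finU' finite_subset by auto
    have "A \<inter> B = {}" using B A by auto
    then have cAB: "card (A \<union> B) = card A + card B" using finA finB by (simp add: card_Un_disjoint)
    have "card B \<le> card (U - S)" using B finU' by (simp add: card_mono)
    then have "card U - card (A \<union> B) = card (S - A) + (card (U - S) - card B)"
      using cAB cardU cardS by linarith
    then show "p ^ card (A \<union> B) * q ^ (card U - card (A \<union> B)) = (p ^ card A * q ^ card (S - A)) * (p ^ card B * q ^ (card (U - S) - card B))"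
      using cAB by (simp add: power_add)
  qed simp
  also have "\<dots> = p ^ card A * q ^ card (S - A) * (p + q) ^ card (U - S)"
    by (simp add: sum_distrib_left[symmetric] binom_pow_sum[OF finU'])
  finally show ?thesis .
qed

lemma joint_consistent:
  fixes p q :: real
  assumes U: "finite U" and S1: "S1 \<subseteq> U" and S2: "S2 \<subseteq> U" and A1: "A1 \<subseteq> S1" and A2: "A2 \<subseteq> S2"
    and cons: "A1 \<inter> S2 = A2 \<inter> S1" and pq: "p + q = 1"
  shows "(\<Sum>E\<in>Pow U. if E \<inter> S1 = A1 \<and> E \<inter> S2 = A2 then p ^ card E * q ^ (card U - card E) else 0)
      * (p ^ card (A2 \<inter> S1) * q ^ card ((S1 - A1) \<inter> (S2 - A2)))
    = (p ^ card A1 * q ^ card (S1 - A1)) * (p ^ card A2 * q ^ card (S2 - A2))"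
proof -
  have fS1: "finite S1" using finite_subset[OF S1 U] .
  have fS2: "finite S2" using finite_subset[OF S2 U] .
  have fin: "finite S1" "finite S2" "finite A1" "finite A2"
    using fS1 fS2 finite_subset[OF A1 fS1] finite_subset[OF A2 fS2] by auto
  have ev: "\<And>E. (E \<inter> S1 = A1 \<and> E \<inter> S2 = A2) \<longleftrightarrow> E \<inter> (S1 \<union> S2) = A1 \<union> A2"
  proof
    fix E assume "E \<inter> S1 = A1 \<and> E \<inter> S2 = A2" then show "E \<inter> (S1 \<union> S2) = A1 \<union> A2" by (simp add: Int_Un_distrib)
  next
    fix E assume h: "E \<inter> (S1 \<union> S2) = A1 \<union> A2"
    have "E \<inter> S1 = (E \<inter> (S1 \<union> S2)) \<inter> S1" by blast
    also have "\<dots> = (A1 \<union> A2) \<inter> S1" by (simp only: h)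
    also have "\<dots> = A1 \<union> (A2 \<inter> S1)" using A1 by blast
    also have "\<dots> = A1 \<union> (A1 \<inter> S2)" by (simp only: cons)
    also have "\<dots> = A1" by blast
    finally have 1: "E \<inter> S1 = A1" .
    have "E \<inter> S2 = (E \<inter> (S1 \<union> S2)) \<inter> S2" by blast
    also have "\<dots> = (A1 \<union> A2) \<inter> S2" by (simp only: h)
    also have "\<dots> = A2 \<union> (A1 \<inter> S2)" using A2 by blast
    also have "\<dots> = A2 \<union> (A2 \<inter> S1)" by (simp only: cons)
    also have "\<dots> = A2" by blast
    finally have 2: "E \<inter> S2 = A2" .
    show "E \<inter> S1 = A1 \<and> E \<inter> S2 = A2" using 1 2 by (rule conjI)
  qed
  have "(\<Sum>E\<in>Pow U. if E \<inter> S1 = A1 \<and> E \<inter> S2 = A2 then p ^ card E * q ^ (card U - card E) else 0)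
      = (\<Sum>E\<in>Pow U. if E \<inter> (S1 \<union> S2) = A1 \<union> A2 then p ^ card E * q ^ (card U - card E) else 0)"
    by (rule sum.cong) (simp_all only: ev)
  also have "\<dots> = p ^ card (A1 \<union> A2) * q ^ card ((S1 \<union> S2) - (A1 \<union> A2))"
  proof -
    have s: "S1 \<union> S2 \<subseteq> U" using S1 S2 by (rule Un_least)
    have a: "A1 \<union> A2 \<subseteq> S1 \<union> S2" using A1 A2 by (rule Un_mono)
    show ?thesis using marginal[OF U s a, of p q] pq by simp
  qed
  finally have P: "(\<Sum>E\<in>Pow U. if E \<inter> S1 = A1 \<and> E \<inter> S2 = A2 then p ^ card E * q ^ (card U - card E) else 0)
      = p ^ card (A1 \<union> A2) * q ^ card ((S1 \<union> S2) - (A1 \<union> A2))" .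
  have i1: "A1 \<inter> A2 = A2 \<inter> S1"
  proof
    show "A1 \<inter> A2 \<subseteq> A2 \<inter> S1" using A1 by blast
    have "A2 \<inter> S1 \<subseteq> A1 \<inter> S2" using cons by simp
    then show "A2 \<inter> S1 \<subseteq> A1 \<inter> A2" by blast
  qed
  have c1: "card (A1 \<union> A2) + card (A2 \<inter> S1) = card A1 + card A2"
    using card_Un_Int[OF fin(3) fin(4)] i1 by simp
  have d: "(S1 \<union> S2) - (A1 \<union> A2) = (S1 - A1) \<union> (S2 - A2)"
  proof
    show "(S1 \<union> S2) - (A1 \<union> A2) \<subseteq> (S1 - A1) \<union> (S2 - A2)" by auto
    show "(S1 - A1) \<union> (S2 - A2) \<subseteq> (S1 \<union> S2) - (A1 \<union> A2)"
    proof
      fix x assume x: "x \<in> (S1 - A1) \<union> (S2 - A2)"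
      show "x \<in> (S1 \<union> S2) - (A1 \<union> A2)"
      proof (cases "x \<in> S1")
        case True
        with x have "x \<notin> A1 \<or> x \<in> S2 - A2" by auto
        moreover have "x \<in> A2 \<Longrightarrow> x \<in> A1" using True cons by (metis IntD1 IntI)
        moreover have "x \<in> A1 \<Longrightarrow> x \<in> S2 \<Longrightarrow> x \<in> A2" using True cons by (metis IntD1 IntI)
        ultimately show ?thesis using True x by auto
      next
        case False
        with x have "x \<in> S2" "x \<notin> A2" by auto
        then show ?thesis using False A1 by auto
      qed
    qed
  qed
  have c2: "card ((S1 \<union> S2) - (A1 \<union> A2)) + card ((S1 - A1) \<inter> (S2 - A2)) = card (S1 - A1) + card (S2 - A2)"
    unfolding d using card_Un_Int[of "S1-A1" "S2-A2"] fin by simp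
  have "p ^ card (A1 \<union> A2) * q ^ card ((S1 \<union> S2) - (A1 \<union> A2)) * (p ^ card (A2 \<inter> S1) * q ^ card ((S1 - A1) \<inter> (S2 - A2)))
     = p ^ (card (A1 \<union> A2) + card (A2 \<inter> S1)) * q ^ (card ((S1 \<union> S2) - (A1 \<union> A2)) + card ((S1 - A1) \<inter> (S2 - A2)))"
    by (simp only: power_add mult_ac)
  also have "\<dots> = p ^ (card A1 + card A2) * q ^ (card (S1 - A1) + card (S2 - A2))"
    by (simp only: c1 c2)
  also have "\<dots> = (p ^ card A1 * q ^ card (S1 - A1)) * (p ^ card A2 * q ^ card (S2 - A2))"
    by (simp only: power_add mult_ac)
  finally show ?thesis unfolding P .
qed

lemma joint_inconsistent:
  fixes p q :: real
  assumes cons: "A1 \<inter> S2 \<noteq> A2 \<inter> S1"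
  shows "(\<Sum>E\<in>Pow U. if E \<inter> S1 = A1 \<and> E \<inter> S2 = A2 then p ^ card E * q ^ (card U - card E) else 0) = 0"
proof -
  have "\<And>E. \<not> (E \<inter> S1 = A1 \<and> E \<inter> S2 = A2)"
  proof
    fix E assume h: "E \<inter> S1 = A1 \<and> E \<inter> S2 = A2"
    then have "A1 \<inter> S2 = E \<inter> S1 \<inter> S2" "A2 \<inter> S1 = E \<inter> S2 \<inter> S1" by auto
    then show False using cons by (simp add: Int_ac)
  qed
  then show ?thesis by (intro sum.neutral) auto
qed

definition AH :: "nat \<Rightarrow> nat set set" where
  "AH k = {e. \<exists>i j. i<k \<and> j<k \<and> hedge i j \<and> e = {i,j}}"
definition Sph :: "nat \<Rightarrow> (nat \<Rightarrow> nat) \<Rightarrow> nat set set" where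
  "Sph k \<phi> = image \<phi> ` all_pairs k"
definition Aph :: "nat \<Rightarrow> (nat \<Rightarrow> nat) \<Rightarrow> nat set set" where
  "Aph k \<phi> = image \<phi> ` AH k"
definition Ev :: "nat \<Rightarrow> (nat \<Rightarrow> nat) \<Rightarrow> nat set set \<Rightarrow> bool" where
  "Ev k \<phi> E \<longleftrightarrow> E \<inter> Sph k \<phi> = Aph k \<phi>"
definition Inj :: "nat \<Rightarrow> nat \<Rightarrow> (nat \<Rightarrow> nat) set" where
  "Inj n k = {\<phi> \<in> {..<k} \<rightarrow>\<^sub>E {..<n}. inj_on \<phi> {..<k}}"

lemma all_pairs_Pow: "all_pairs k \<subseteq> Pow {..<k}"
  unfolding all_pairs_def by auto

lemma finite_all_pairs: "finite (all_pairs k)"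
  using finite_subset[OF all_pairs_Pow] by simp

lemma AH_sub: "AH k \<subseteq> all_pairs k"
  unfolding AH_def all_pairs_def hedge_def by auto

lemma AH_Pow: "AH k \<subseteq> Pow {..<k}"
  using AH_sub all_pairs_Pow by (rule subset_trans)

lemma finite_Inj: "finite (Inj n k)"
  unfolding Inj_def by (rule finite_subset[of _ "{..<k} \<rightarrow>\<^sub>E {..<n}"]) (auto intro: finite_PiE)

lemma card_Inj: "card (Inj n k) = (\<Prod>i<k. n - i)"
proof -
  have "card (Inj n k) = card {f \<in> {..<k} \<rightarrow>\<^sub>E {..<n}. inj_on f {..<k}}" unfolding Inj_def ..
  also have "\<dots> = n ^ (k - k) * prod ((-) n) {0..<k}"
    using card_inj_on_subset_funcset[of "{..<k}" "{..<n}" "{..<k}"] by simp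
  finally show ?thesis by (simp add: atLeast0LessThan)
qed

context
  fixes n k :: nat and \<phi> :: "nat \<Rightarrow> nat"
  assumes phi: "\<phi> \<in> Inj n k"
begin

lemma phi_inj: "inj_on \<phi> {..<k}" using phi unfolding Inj_def by auto
lemma phi_range: "i < k \<Longrightarrow> \<phi> i < n" using phi unfolding Inj_def by auto

lemma inj_img: "inj_on (image \<phi>) (Pow {..<k})"
  by (rule inj_on_image_Pow[OF phi_inj])

lemma Sph_sub: "Sph k \<phi> \<subseteq> all_pairs n"
proof
  fix e assume "e \<in> Sph k \<phi>"
  then obtain i j where "i < k" "j < k" "i \<noteq> j" "e = {\<phi> i, \<phi> j}"
    unfolding Sph_def all_pairs_def by auto
  moreover then have "\<phi> i \<noteq> \<phi> j" using phi_inj by (auto dest: inj_onD)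
  ultimately show "e \<in> all_pairs n" unfolding all_pairs_def using phi_range by auto
qed

lemma Aph_sub: "Aph k \<phi> \<subseteq> Sph k \<phi>"
  unfolding Aph_def Sph_def using AH_sub by (rule image_mono)

lemma card_Sph: "card (Sph k \<phi>) = card (all_pairs k)"
  unfolding Sph_def by (rule card_image[OF inj_on_subset[OF inj_img all_pairs_Pow]])

lemma card_Aph: "card (Aph k \<phi>) = card (AH k)"
  unfolding Aph_def by (rule card_image[OF inj_on_subset[OF inj_img AH_Pow]])

lemma card_SA: "card (Sph k \<phi> - Aph k \<phi>) = card (all_pairs k - AH k)"
proof -
  have "Sph k \<phi> - Aph k \<phi> = image \<phi> ` (all_pairs k - AH k)"
    unfolding Sph_def Aph_def
    by (rule inj_on_image_set_diff[OF inj_img _ AH_Pow, symmetric]) (use all_pairs_Pow in auto)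
  then show ?thesis
  proof -
    have "all_pairs k - AH k \<subseteq> Pow {..<k}" using all_pairs_Pow[of k] by blast
    then show ?thesis using card_image[OF inj_on_subset[OF inj_img]] \<open>Sph k \<phi> - Aph k \<phi> = _\<close> by metis
  qed
qed

lemma prob_Ev:
  "prob_gnp n p (Ev k \<phi>) = p ^ card (AH k) * (1 - p) ^ card (all_pairs k - AH k)"
proof -
  have "prob_gnp n p (Ev k \<phi>) = (\<Sum>E\<in>Pow (all_pairs n). if E \<inter> Sph k \<phi> = Aph k \<phi>
      then p ^ card E * (1 - p) ^ (card (all_pairs n) - card E) else 0)"
    unfolding prob_gnp_def Ev_def ..
  also have "\<dots> = p ^ card (Aph k \<phi>) * (1 - p) ^ card (Sph k \<phi> - Aph k \<phi>)"
    using marginal[OF finite_all_pairs Sph_sub Aph_sub, of p "1 - p"] by simp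
  finally show ?thesis by (simp add: card_Aph card_SA)
qed

lemma Ev_edges:
  assumes "Ev k \<phi> E" "E \<subseteq> all_pairs n" "i < k" "j < k"
  shows "{\<phi> i, \<phi> j} \<in> E \<longleftrightarrow> hedge i j"
proof (cases "i = j")
  case True
  have "{\<phi> i} \<notin> all_pairs n" unfolding all_pairs_def by (auto simp: doubleton_eq_iff)
  then show ?thesis using True assms(2) by (auto simp: hedge_def)
next
  case False
  have ij: "{i,j} \<in> all_pairs k" unfolding all_pairs_def using False assms by auto
  have "image \<phi> {i,j} \<in> image \<phi> ` all_pairs k" using ij by (rule imageI)
  then have S: "{\<phi> i, \<phi> j} \<in> Sph k \<phi>" unfolding Sph_def by simp
  have "{\<phi> i, \<phi> j} \<in> E \<longleftrightarrow> {\<phi> i, \<phi> j} \<in> Aph k \<phi>"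
    using assms(1) S unfolding Ev_def by blast
  also have "\<dots> \<longleftrightarrow> {i,j} \<in> AH k"
  proof
    assume "{\<phi> i, \<phi> j} \<in> Aph k \<phi>"
    then obtain e where e: "e \<in> AH k" "image \<phi> e = image \<phi> {i,j}" unfolding Aph_def by auto
    have e1: "e \<in> Pow {..<k}" using e(1) AH_Pow by auto
    have e2: "{i,j} \<in> Pow {..<k}" using assms by auto
    have "e = {i,j}" by (rule inj_onD[OF inj_img e(2) e1 e2])
    then show "{i,j} \<in> AH k" using e by simp
  next
    assume "{i,j} \<in> AH k"
    then have "image \<phi> {i,j} \<in> image \<phi> ` AH k" by (rule imageI)
    then show "{\<phi> i, \<phi> j} \<in> Aph k \<phi>" unfolding Aph_def by simp
  qed
  also have "\<dots> \<longleftrightarrow> hedge i j"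
  proof
    assume "{i,j} \<in> AH k"
    then obtain i' j' where "hedge i' j'" "{i,j} = {i',j'}" unfolding AH_def by auto
    then show "hedge i j" unfolding hedge_def doubleton_eq_iff by auto
  next
    assume "hedge i j" then show "{i,j} \<in> AH k" unfolding AH_def using assms by auto
  qed
  finally show ?thesis .
qed

end

lemma Sph_elem: assumes "e \<in> Sph k \<phi>" shows "\<exists>i j. i<k \<and> j<k \<and> i\<noteq>j \<and> e = {\<phi> i, \<phi> j}"
  using assms unfolding Sph_def all_pairs_def by auto

lemma Aph_elem: assumes "e \<in> Aph k \<phi>" shows "\<exists>i j. i<k \<and> j<k \<and> hedge i j \<and> e = {\<phi> i, \<phi> j}"
  using assms unfolding Aph_def AH_def by auto

lemma Sph_elem_sub: assumes "e \<in> Sph k \<phi>" shows "e \<subseteq> \<phi> ` {..<k}"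
  using Sph_elem[OF assms] by auto

lemma Sph_elem_card: assumes "\<phi> \<in> Inj n k" "e \<in> Sph k \<phi>" shows "card e = 2"
proof -
  obtain i j where "i<k" "j<k" "i\<noteq>j" "e = {\<phi> i, \<phi> j}" using Sph_elem[OF assms(2)] by blast
  moreover have "\<phi> i \<noteq> \<phi> j" using phi_inj[OF assms(1)] calculation by (auto dest: inj_onD)
  ultimately show ?thesis by simp
qed

lemma overlap_S:
  assumes "\<phi>1 \<in> Inj n k" "\<phi>2 \<in> Inj n k"
  shows "card (Sph k \<phi>1 \<inter> Sph k \<phi>2) \<le> card (\<phi>1 ` {..<k} \<inter> \<phi>2 ` {..<k}) choose 2"
proof -
  let ?O = "\<phi>1 ` {..<k} \<inter> \<phi>2 ` {..<k}"
  have fO: "finite ?O" by simp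
  have sub: "Sph k \<phi>1 \<inter> Sph k \<phi>2 \<subseteq> {B. B \<subseteq> ?O \<and> card B = 2}"
  proof
    fix e assume e: "e \<in> Sph k \<phi>1 \<inter> Sph k \<phi>2"
    then have "e \<subseteq> ?O" using Sph_elem_sub[of e k \<phi>1] Sph_elem_sub[of e k \<phi>2] by blast
    moreover have "card e = 2" using Sph_elem_card[OF assms(1)] e by blast
    ultimately show "e \<in> {B. B \<subseteq> ?O \<and> card B = 2}" by simp
  qed
  have fin: "finite {B. B \<subseteq> ?O \<and> card B = 2}" using fO by simp
  have "card (Sph k \<phi>1 \<inter> Sph k \<phi>2) \<le> card {B. B \<subseteq> ?O \<and> card B = 2}"
    by (rule card_mono[OF fin sub])
  also have "\<dots> = card ?O choose 2" by (rule n_subsets[OF fO])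
  finally show ?thesis .
qed

lemma overlap_A:
  assumes p1: "\<phi>1 \<in> Inj n k" and p2: "\<phi>2 \<in> Inj n k"
  shows "card (Aph k \<phi>2 \<inter> Sph k \<phi>1) \<le> card (\<phi>1 ` {..<k} \<inter> \<phi>2 ` {..<k})"
proof -
  let ?O = "\<phi>1 ` {..<k} \<inter> \<phi>2 ` {..<k}"
  let ?X = "Aph k \<phi>2 \<inter> Sph k \<phi>1"
  have fO: "finite ?O" by simp
  have Xsub: "\<And>x. x \<in> ?X \<Longrightarrow> x \<subseteq> ?O"
  proof -
    fix x assume x: "x \<in> ?X"
    then have "x \<in> Sph k \<phi>2" using Aph_sub[OF p2] by blast
    then show "x \<subseteq> ?O" using x Sph_elem_sub[of x k \<phi>1] Sph_elem_sub[of x k \<phi>2] by blast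
  qed
  have Xform: "\<And>x. x \<in> ?X \<Longrightarrow> \<exists>i j. i<k \<and> j<k \<and> hedge i j \<and> x = {\<phi>2 i, \<phi>2 j}"
    using Aph_elem by blast
  have inj2: "inj_on \<phi>2 {..<k}" by (rule phi_inj[OF p2])
  show ?thesis
  proof (cases "\<phi>2 0 \<in> ?O")
    case True
    have sub: "?X \<subseteq> insert {\<phi>2 1, \<phi>2 2} ((\<lambda>y. {\<phi>2 0, y}) ` (?O - {\<phi>2 0}))"
    proof
      fix x assume x: "x \<in> ?X"
      obtain i j where ij: "i<k" "j<k" "hedge i j" "x = {\<phi>2 i, \<phi>2 j}" using Xform[OF x] by blast
      have xO: "x \<subseteq> ?O" using Xsub[OF x] .
      consider "i = 0" | "j = 0" | "{i,j} = {1,2}" using ij(3) unfolding hedge_def by blast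
      then show "x \<in> insert {\<phi>2 1, \<phi>2 2} ((\<lambda>y. {\<phi>2 0, y}) ` (?O - {\<phi>2 0}))"
      proof cases
        case 1
        then have "j \<noteq> 0" using ij(3) unfolding hedge_def by simp
        then have "\<phi>2 j \<noteq> \<phi>2 0" using inj_onD[OF inj2, of j 0] ij(2) by auto
        moreover have "\<phi>2 j \<in> ?O" using xO ij(4) by blast
        ultimately show ?thesis using ij(4) 1 by blast
      next
        case 2
        then have "i \<noteq> 0" using ij(3) unfolding hedge_def by simp
        then have "\<phi>2 i \<noteq> \<phi>2 0" using inj_onD[OF inj2, of i 0] ij(1) by auto
        moreover have "\<phi>2 i \<in> ?O" using xO ij(4) by blast
        moreover have "x = {\<phi>2 0, \<phi>2 i}" using ij(4) 2 by blast
        ultimately show ?thesis by blast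
      next
        case 3
        then have "x = {\<phi>2 1, \<phi>2 2}" using ij(4) unfolding doubleton_eq_iff by auto
        then show ?thesis by blast
      qed
    qed
    have "card ?X \<le> card (insert {\<phi>2 1, \<phi>2 2} ((\<lambda>y. {\<phi>2 0, y}) ` (?O - {\<phi>2 0})))"
      by (rule card_mono[OF _ sub]) simp
    also have "\<dots> \<le> Suc (card ((\<lambda>y. {\<phi>2 0, y}) ` (?O - {\<phi>2 0})))"
      by (rule card_insert_le_m1) simp_all
    also have "\<dots> \<le> Suc (card (?O - {\<phi>2 0}))"
      using card_image_le[of "?O - {\<phi>2 0}" "\<lambda>y. {\<phi>2 0, y}"] by simp
    also have "\<dots> = card ?O" using True fO
      by (metis card_Diff1_less card_Diff_singleton_if card.remove One_nat_def Suc_pred card_gt_0_iff empty_iff)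
    finally show ?thesis .
  next
    case False
    have sub: "?X \<subseteq> {{\<phi>2 1, \<phi>2 2}}"
    proof
      fix x assume x: "x \<in> ?X"
      obtain i j where ij: "i<k" "j<k" "hedge i j" "x = {\<phi>2 i, \<phi>2 j}" using Xform[OF x] by blast
      have xO: "x \<subseteq> ?O" using Xsub[OF x] .
      have "i \<noteq> 0" "j \<noteq> 0" using xO False ij(4) by auto
      then have "{i,j} = {1,2}" using ij(3) unfolding hedge_def by blast
      then show "x \<in> {{\<phi>2 1, \<phi>2 2}}" using ij(4) unfolding doubleton_eq_iff by auto
    qed
    show ?thesis
    proof (cases "?X = {}")
      case True then show ?thesis by simp
    next
      case False
      then obtain x where x: "x \<in> ?X" by blast
      then have "x \<in> {{\<phi>2 1, \<phi>2 2}}" using sub by blast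
      then have "\<phi>2 1 \<in> ?O" using Xsub[OF x] by blast
      then have "card ?O \<ge> 1" using fO by (metis One_nat_def Suc_leI card_gt_0_iff empty_iff)
      moreover have "card ?X \<le> 1" using card_mono[OF _ sub] by simp
      ultimately show ?thesis by linarith
    qed
  qed
qed

definition pi0 :: "nat \<Rightarrow> real \<Rightarrow> real" where
  "pi0 k p = p ^ card (AH k) * (1 - p) ^ card (all_pairs k - AH k)"

definition gfun :: "real \<Rightarrow> nat \<Rightarrow> real" where
  "gfun p l = 1 / (p ^ l * (1 - p) ^ (l choose 2))"

lemma joint_bound:
  assumes p1: "\<phi>1 \<in> Inj n k" and p2: "\<phi>2 \<in> Inj n k" and p: "0 < p" "p < 1"
  shows "prob_gnp n p (\<lambda>E. Ev k \<phi>1 E \<and> Ev k \<phi>2 E)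
     \<le> pi0 k p ^ 2 * gfun p (card (\<phi>1 ` {..<k} \<inter> \<phi>2 ` {..<k}))"
proof -
  let ?l = "card (\<phi>1 ` {..<k} \<inter> \<phi>2 ` {..<k})"
  let ?S1 = "Sph k \<phi>1" and ?S2 = "Sph k \<phi>2" and ?A1 = "Aph k \<phi>1" and ?A2 = "Aph k \<phi>2"
  have q: "0 < 1 - p" "1 - p \<le> 1" using p by auto
  have Pdef: "prob_gnp n p (\<lambda>E. Ev k \<phi>1 E \<and> Ev k \<phi>2 E) =
    (\<Sum>E\<in>Pow (all_pairs n). if E \<inter> ?S1 = ?A1 \<and> E \<inter> ?S2 = ?A2 then p ^ card E * (1 - p) ^ (card (all_pairs n) - card E) else 0)"
    unfolding prob_gnp_def Ev_def ..
  have rhs_nonneg: "0 \<le> pi0 k p ^ 2 * gfun p ?l"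
    using p q unfolding gfun_def pi0_def by simp
  show ?thesis
  proof (cases "?A1 \<inter> ?S2 = ?A2 \<inter> ?S1")
    case False
    show ?thesis unfolding Pdef joint_inconsistent[OF False] by (rule rhs_nonneg)
  next
    case True
    let ?a = "card (?A2 \<inter> ?S1)" and ?c = "card ((?S1 - ?A1) \<inter> (?S2 - ?A2))"
    let ?P = "prob_gnp n p (\<lambda>E. Ev k \<phi>1 E \<and> Ev k \<phi>2 E)"
    have J: "?P * (p ^ ?a * (1 - p) ^ ?c) = (p ^ card ?A1 * (1 - p) ^ card (?S1 - ?A1)) * (p ^ card ?A2 * (1 - p) ^ card (?S2 - ?A2))"
      unfolding Pdef
      by (rule joint_consistent[OF finite_all_pairs Sph_sub[OF p1] Sph_sub[OF p2] Aph_sub[OF p1] Aph_sub[OF p2] True]) simp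
    then have J2: "?P * (p ^ ?a * (1 - p) ^ ?c) = pi0 k p ^ 2"
      by (simp add: card_Aph[OF p1] card_Aph[OF p2] card_SA[OF p1] card_SA[OF p2] pi0_def power2_eq_square)
    have a: "?a \<le> ?l" by (rule overlap_A[OF p1 p2])
    have "?c \<le> card (?S1 \<inter> ?S2)" by (rule card_mono) (use finite_all_pairs finite_subset Sph_sub[OF p1] in auto)
    also have "\<dots> \<le> ?l choose 2" by (rule overlap_S[OF p1 p2])
    finally have c: "?c \<le> ?l choose 2" .
    have pos: "0 < p ^ ?a * (1 - p) ^ ?c" using p q by simp
    have le: "p ^ ?l * (1 - p) ^ (?l choose 2) \<le> p ^ ?a * (1 - p) ^ ?c"
      by (intro mult_mono power_decreasing) (use p q a c in auto)
    have pos2: "0 < p ^ ?l * (1 - p) ^ (?l choose 2)" using p q by simp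
    have nz: "p ^ ?a * (1 - p) ^ ?c \<noteq> 0" using pos by linarith
    have "?P = (?P * (p ^ ?a * (1 - p) ^ ?c)) / (p ^ ?a * (1 - p) ^ ?c)" using nz by simp
    also have "\<dots> = pi0 k p ^ 2 / (p ^ ?a * (1 - p) ^ ?c)" by (simp only: J2)
    also have "\<dots> \<le> pi0 k p ^ 2 / (p ^ ?l * (1 - p) ^ (?l choose 2))"
      by (rule divide_left_mono[OF le]) (use pos pos2 in auto)
    also have "\<dots> = pi0 k p ^ 2 * gfun p ?l" unfolding gfun_def by simp
    finally show ?thesis .
  qed
qed

lemma sum_Pow_card:
  fixes F :: "nat \<Rightarrow> real"
  assumes "finite K"
  shows "(\<Sum>L\<in>Pow K. F (card L)) = (\<Sum>l\<le>card K. real (card K choose l) * F l)"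
proof -
  have "(\<Sum>L\<in>Pow K. F (card L)) = (\<Sum>l\<in>{..card K}. \<Sum>L\<in>{L. L \<in> Pow K \<and> card L = l}. F (card L))"
    by (rule sum.group[symmetric]) (use assms in \<open>auto simp: card_mono\<close>)
  also have "\<dots> = (\<Sum>l\<le>card K. real (card K choose l) * F l)"
  proof (rule sum.cong[OF refl])
    fix l assume "l \<in> {..card K}"
    have "(\<Sum>L\<in>{L. L \<in> Pow K \<and> card L = l}. F (card L)) = (\<Sum>L\<in>{L. L \<subseteq> K \<and> card L = l}. F l)"
      by (rule sum.cong) auto
    also have "\<dots> = real (card {L. L \<subseteq> K \<and> card L = l}) * F l" by simp
    also have "\<dots> = real (card K choose l) * F l" by (simp add: n_subsets[OF assms])
    finally show "(\<Sum>L\<in>{L. L \<in> Pow K \<and> card L = l}. F (card L)) = real (card K choose l) * F l" .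
  qed
  finally show ?thesis .
qed

lemma card_fixed_hits:
  assumes T: "T \<subseteq> N" "finite N" and L: "L \<subseteq> K" "finite K"
  shows "card {\<phi> \<in> K \<rightarrow>\<^sub>E N. {i\<in>K. \<phi> i \<in> T} = L} = card T ^ card L * (card N - card T) ^ (card K - card L)"
proof -
  have eq: "{\<phi> \<in> K \<rightarrow>\<^sub>E N. {i\<in>K. \<phi> i \<in> T} = L} = (\<Pi>\<^sub>E i\<in>K. if i \<in> L then T else N - T)"
  proof
    show "{\<phi> \<in> K \<rightarrow>\<^sub>E N. {i\<in>K. \<phi> i \<in> T} = L} \<subseteq> (\<Pi>\<^sub>E i\<in>K. if i \<in> L then T else N - T)"
      by (auto simp: PiE_iff extensional_def)
    show "(\<Pi>\<^sub>E i\<in>K. if i \<in> L then T else N - T) \<subseteq> {\<phi> \<in> K \<rightarrow>\<^sub>E N. {i\<in>K. \<phi> i \<in> T} = L}"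
    proof
      fix \<phi> assume h: "\<phi> \<in> (\<Pi>\<^sub>E i\<in>K. if i \<in> L then T else N - T)"
      have "\<phi> \<in> K \<rightarrow>\<^sub>E N" using h T by (auto simp: PiE_iff split: if_splits)
      moreover have "{i\<in>K. \<phi> i \<in> T} = L"
      proof
        show "{i\<in>K. \<phi> i \<in> T} \<subseteq> L" using h by (auto simp: PiE_iff split: if_splits)
        show "L \<subseteq> {i\<in>K. \<phi> i \<in> T}"
        proof
          fix x assume "x \<in> L"
          then have "x \<in> K" using L by auto
          then show "x \<in> {i\<in>K. \<phi> i \<in> T}" using h \<open>x \<in> L\<close> by (auto simp: PiE_iff)
        qed
      qed
      ultimately show "\<phi> \<in> {\<phi> \<in> K \<rightarrow>\<^sub>E N. {i\<in>K. \<phi> i \<in> T} = L}" by simp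
    qed
  qed
  have "card (\<Pi>\<^sub>E i\<in>K. if i \<in> L then T else N - T) = (\<Prod>i\<in>K. card (if i \<in> L then T else N - T))"
    by (rule card_PiE[OF L(2)])
  also have "\<dots> = (\<Prod>i\<in>K. if i \<in> L then card T else card (N - T))"
    by (rule prod.cong) auto
  also have "\<dots> = (\<Prod>i\<in>K \<inter> {i. i \<in> L}. card T) * (\<Prod>i\<in>K \<inter> - {i. i \<in> L}. card (N - T))"
    by (rule prod.If_cases[OF L(2)])
  also have "K \<inter> {i. i \<in> L} = L" using L by auto
  also have "K \<inter> - {i. i \<in> L} = K - L" by auto
  also have "card (N - T) = card N - card T" using T by (meson card_Diff_subset finite_subset)
  finally have "card (\<Pi>\<^sub>E i\<in>K. if i \<in> L then T else N - T) = card T ^ card L * (card N - card T) ^ card (K - L)"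
    by simp
  moreover have "card (K - L) = card K - card L" using L by (meson card_Diff_subset finite_subset)
  ultimately show ?thesis unfolding eq by simp
qed

lemma count_bound:
  fixes G :: "nat \<Rightarrow> real"
  assumes T: "T \<subseteq> {..<n}" "card T = k" and G: "\<And>l. 0 \<le> G l"
  shows "(\<Sum>\<phi>\<in>Inj n k. G (card (T \<inter> \<phi> ` {..<k})))
     \<le> (\<Sum>l\<le>k. real (k choose l) * G l * real k ^ l * real (n - k) ^ (k - l))"
proof -
  let ?K = "{..<k}" and ?N = "{..<n}"
  let ?C = "\<lambda>\<phi>. {i\<in>?K. \<phi> i \<in> T}"
  have c: "card (T \<inter> \<phi> ` ?K) = card (?C \<phi>)" if "\<phi> \<in> Inj n k" for \<phi>
  proof -
    have "T \<inter> \<phi> ` ?K = \<phi> ` ?C \<phi>" by auto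
    moreover have "inj_on \<phi> (?C \<phi>)" using phi_inj[OF that] by (rule inj_on_subset) auto
    ultimately show ?thesis by (simp add: card_image)
  qed
  have "(\<Sum>\<phi>\<in>Inj n k. G (card (T \<inter> \<phi> ` ?K))) = (\<Sum>\<phi>\<in>Inj n k. G (card (?C \<phi>)))"
    by (rule sum.cong) (simp_all add: c)
  also have "\<dots> \<le> (\<Sum>\<phi>\<in>?K \<rightarrow>\<^sub>E ?N. G (card (?C \<phi>)))"
    by (rule sum_mono2) (auto simp: Inj_def G intro: finite_PiE)
  also have "\<dots> = (\<Sum>L\<in>Pow ?K. \<Sum>\<phi>\<in>{\<phi>. \<phi> \<in> ?K \<rightarrow>\<^sub>E ?N \<and> ?C \<phi> = L}. G (card (?C \<phi>)))"
    by (rule sum.group[symmetric]) (auto intro: finite_PiE)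
  also have "\<dots> = (\<Sum>L\<in>Pow ?K. real (card T ^ card L * (card ?N - card T) ^ (card ?K - card L)) * G (card L))"
  proof (rule sum.cong[OF refl])
    fix L assume L: "L \<in> Pow ?K"
    have "(\<Sum>\<phi>\<in>{\<phi>. \<phi> \<in> ?K \<rightarrow>\<^sub>E ?N \<and> ?C \<phi> = L}. G (card (?C \<phi>))) = (\<Sum>\<phi>\<in>{\<phi> \<in> ?K \<rightarrow>\<^sub>E ?N. ?C \<phi> = L}. G (card L))"
      by (rule sum.cong) auto
    also have "\<dots> = real (card {\<phi> \<in> ?K \<rightarrow>\<^sub>E ?N. ?C \<phi> = L}) * G (card L)" by simp
    also have "card {\<phi> \<in> ?K \<rightarrow>\<^sub>E ?N. ?C \<phi> = L} = card T ^ card L * (card ?N - card T) ^ (card ?K - card L)"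
      by (rule card_fixed_hits) (use T L in auto)
    finally show "(\<Sum>\<phi>\<in>{\<phi>. \<phi> \<in> ?K \<rightarrow>\<^sub>E ?N \<and> ?C \<phi> = L}. G (card (?C \<phi>))) = real (card T ^ card L * (card ?N - card T) ^ (card ?K - card L)) * G (card L)" .
  qed
  also have "\<dots> = (\<Sum>L\<in>Pow ?K. (\<lambda>l. real k ^ l * real (n - k) ^ (k - l) * G l) (card L))"
    using T by (intro sum.cong) simp_all
  also have "\<dots> = (\<Sum>l\<le>k. real (k choose l) * (real k ^ l * real (n - k) ^ (k - l) * G l))"
    using sum_Pow_card[of ?K "\<lambda>l. real k ^ l * real (n - k) ^ (k - l) * G l"] by simp
  finally show ?thesis by (simp add: mult_ac)
qed

lemma second_moment_ineq:
  fixes w X :: "'a \<Rightarrow> real"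
  assumes w: "\<And>x. x \<in> A \<Longrightarrow> 0 \<le> w x" and X: "\<And>x. x \<in> A \<Longrightarrow> 0 \<le> X x"
  shows "(\<Sum>x\<in>A. w x * X x)^2 \<le> (\<Sum>x\<in>A. if X x > 0 then w x else 0) * (\<Sum>x\<in>A. w x * (X x)^2)"
proof -
  let ?Z = "\<lambda>x. if X x > 0 then 1 else (0::real)"
  have CS: "(\<Sum>x\<in>A. (sqrt (w x) * ?Z x) * (sqrt (w x) * X x))^2
      \<le> (\<Sum>x\<in>A. (sqrt (w x) * ?Z x)^2) * (\<Sum>x\<in>A. (sqrt (w x) * X x)^2)"
    by (rule Cauchy_Schwarz_ineq_sum)
  have e1: "(\<Sum>x\<in>A. (sqrt (w x) * ?Z x) * (sqrt (w x) * X x)) = (\<Sum>x\<in>A. w x * X x)"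
  proof (rule sum.cong[OF refl])
    fix x assume x: "x \<in> A"
    have "(sqrt (w x) * ?Z x) * (sqrt (w x) * X x) = (sqrt (w x))^2 * (?Z x * X x)" by (simp add: power2_eq_square mult_ac)
    also have "\<dots> = w x * X x" using w[OF x] X[OF x] by auto
    finally show "(sqrt (w x) * ?Z x) * (sqrt (w x) * X x) = w x * X x" .
  qed
  have e2: "(\<Sum>x\<in>A. (sqrt (w x) * ?Z x)^2) = (\<Sum>x\<in>A. if X x > 0 then w x else 0)"
    by (rule sum.cong[OF refl]) (use w in \<open>auto simp: power_mult_distrib\<close>)
  have e3: "(\<Sum>x\<in>A. (sqrt (w x) * X x)^2) = (\<Sum>x\<in>A. w x * (X x)^2)"
    by (rule sum.cong[OF refl]) (use w in \<open>auto simp: power_mult_distrib\<close>)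
  show ?thesis using CS unfolding e1 e2 e3 .
qed

context
  fixes n k :: nat and p :: real
begin

definition wt :: "nat set set \<Rightarrow> real" where
  "wt E = p ^ card E * (1 - p) ^ (card (all_pairs n) - card E)"

definition Xc :: "nat set set \<Rightarrow> real" where
  "Xc E = (\<Sum>\<phi>\<in>Inj n k. if Ev k \<phi> E then 1 else 0)"

lemma prob_gnp_wt: "prob_gnp n p B = (\<Sum>E\<in>Pow (all_pairs n). if B E then wt E else 0)"
  unfolding prob_gnp_def wt_def ..

lemma EX: "(\<Sum>E\<in>Pow (all_pairs n). wt E * Xc E) = (\<Sum>\<phi>\<in>Inj n k. prob_gnp n p (Ev k \<phi>))"
proof -
  have "(\<Sum>E\<in>Pow (all_pairs n). wt E * Xc E) = (\<Sum>E\<in>Pow (all_pairs n). \<Sum>\<phi>\<in>Inj n k. if Ev k \<phi> E then wt E else 0)"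
    unfolding Xc_def by (simp add: sum_distrib_left if_distrib cong: if_cong)
  also have "\<dots> = (\<Sum>\<phi>\<in>Inj n k. \<Sum>E\<in>Pow (all_pairs n). if Ev k \<phi> E then wt E else 0)"
    by (rule sum.swap)
  finally show ?thesis by (simp add: prob_gnp_wt)
qed

lemma EX2: "(\<Sum>E\<in>Pow (all_pairs n). wt E * (Xc E)^2)
    = (\<Sum>\<phi>1\<in>Inj n k. \<Sum>\<phi>2\<in>Inj n k. prob_gnp n p (\<lambda>E. Ev k \<phi>1 E \<and> Ev k \<phi>2 E))"
proof -
  have sq: "(Xc E)^2 = (\<Sum>\<phi>1\<in>Inj n k. \<Sum>\<phi>2\<in>Inj n k. if Ev k \<phi>1 E \<and> Ev k \<phi>2 E then 1 else 0)" for E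
    unfolding Xc_def power2_eq_square sum_product by (rule sum.cong[OF refl], rule sum.cong[OF refl]) simp
  have "(\<Sum>E\<in>Pow (all_pairs n). wt E * (Xc E)^2)
      = (\<Sum>E\<in>Pow (all_pairs n). \<Sum>\<phi>1\<in>Inj n k. \<Sum>\<phi>2\<in>Inj n k. if Ev k \<phi>1 E \<and> Ev k \<phi>2 E then wt E else 0)"
    unfolding sq by (simp add: sum_distrib_left if_distrib cong: if_cong)
  also have "\<dots> = (\<Sum>\<phi>1\<in>Inj n k. \<Sum>E\<in>Pow (all_pairs n). \<Sum>\<phi>2\<in>Inj n k. if Ev k \<phi>1 E \<and> Ev k \<phi>2 E then wt E else 0)"
    by (rule sum.swap)
  also have "\<dots> = (\<Sum>\<phi>1\<in>Inj n k. \<Sum>\<phi>2\<in>Inj n k. \<Sum>E\<in>Pow (all_pairs n). if Ev k \<phi>1 E \<and> Ev k \<phi>2 E then wt E else 0)"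
    by (rule sum.cong[OF refl], rule sum.swap)
  finally show ?thesis by (simp add: prob_gnp_wt)
qed

end

lemma gfun0[simp]: "gfun p 0 = 1" unfolding gfun_def by (simp add: choose_two)

lemma prob_main:
  fixes n k :: nat and p :: real
  assumes p: "0 < p" "p < 1" and k: "3 \<le> k" "k < n"
    and delta: "(\<Sum>l\<in>{1..k}. real (k choose l) * gfun p l * (real k / (real n - real k))^l) < 1"
  shows "prob_gnp n p (\<lambda>E. \<exists>W \<subseteq> {..<n}. card W = k \<and> is_diameter_graph_R2 W E
           \<and> chromatic_number W E = 3 \<and> connected_induced W E) > 1/2"
proof -
  define \<delta> where "\<delta> = (\<Sum>l\<in>{1..k}. real (k choose l) * gfun p l * (real k / (real n - real k))^l)"
  define I where "I = Inj n k"
  define \<Omega> where "\<Omega> = Pow (all_pairs n)"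
  define c where "c = real (card I)"
  define \<pi> where "\<pi> = pi0 k p"
  have q: "0 < 1 - p" using p by simp
  have gpos: "\<And>l. 0 \<le> gfun p l" unfolding gfun_def using p q by simp
  have \<delta>0: "0 \<le> \<delta>" unfolding \<delta>_def using gpos k by (intro sum_nonneg mult_nonneg_nonneg) auto
  have nk: "real (n - k) = real n - real k" using k by simp
  have nkpos: "real n - real k > 0" using k by simp
  have \<pi>pos: "\<pi> > 0" unfolding \<pi>_def pi0_def using p q by simp
  have cI: "c \<ge> real (n - k) ^ k"
  proof -
    have "c = (\<Prod>i<k. real (n - i))" unfolding c_def I_def card_Inj by simp
    also have "\<dots> \<ge> (\<Prod>i<k. real (n - k))" by (rule prod_mono) auto
    finally show ?thesis by simp
  qed
  have cpos: "c > 0" using cI nkpos nk by (smt (verit) zero_less_power)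
  have finI: "finite I" unfolding I_def by (rule finite_Inj)
  have EXv: "(\<Sum>E\<in>\<Omega>. wt n p E * Xc n k E) = c * \<pi>"
    unfolding \<Omega>_def EX c_def \<pi>_def I_def
    by (simp add: prob_Ev pi0_def)
  have inner: "(\<Sum>\<phi>2\<in>I. gfun p (card (\<phi>1 ` {..<k} \<inter> \<phi>2 ` {..<k}))) \<le> (1 + \<delta>) * c"
    if \<phi>1: "\<phi>1 \<in> I" for \<phi>1
  proof -
    have T: "\<phi>1 ` {..<k} \<subseteq> {..<n}" using phi_range[OF \<phi>1[unfolded I_def]] by auto
    have cT: "card (\<phi>1 ` {..<k}) = k" using card_image[OF phi_inj[OF \<phi>1[unfolded I_def]]] by simp
    have "(\<Sum>\<phi>2\<in>I. gfun p (card (\<phi>1 ` {..<k} \<inter> \<phi>2 ` {..<k})))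
       \<le> (\<Sum>l\<le>k. real (k choose l) * gfun p l * real k ^ l * real (n - k) ^ (k - l))"
      unfolding I_def by (rule count_bound[OF T cT gpos])
    also have "\<dots> = (\<Sum>l\<le>k. real (n - k) ^ k * (real (k choose l) * gfun p l * (real k / (real n - real k))^l))"
    proof (rule sum.cong[OF refl])
      fix l assume "l \<in> {..k}"
      then have lk: "l \<le> k" by simp
      have "real (n - k) ^ k = real (n - k) ^ l * real (n - k) ^ (k - l)"
        using lk by (simp add: power_add[symmetric])
      then show "real (k choose l) * gfun p l * real k ^ l * real (n - k) ^ (k - l)
          = real (n - k) ^ k * (real (k choose l) * gfun p l * (real k / (real n - real k))^l)"
        using nkpos nk by (simp add: power_divide field_simps)
    qed
    also have "\<dots> = real (n - k) ^ k * (\<Sum>l\<le>k. real (k choose l) * gfun p l * (real k / (real n - real k))^l)"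
      by (simp add: sum_distrib_left)
    also have "(\<Sum>l\<le>k. real (k choose l) * gfun p l * (real k / (real n - real k))^l) = 1 + \<delta>"
    proof -
      have "{..k} = insert 0 {1..k}" by auto
      then show ?thesis unfolding \<delta>_def by simp
    qed
    also have "real (n - k) ^ k * (1 + \<delta>) \<le> c * (1 + \<delta>)"
      using cI \<delta>0 by (intro mult_right_mono) auto
    finally show ?thesis by (simp add: mult_ac)
  qed
  have EX2v: "(\<Sum>E\<in>\<Omega>. wt n p E * (Xc n k E)^2) \<le> \<pi>^2 * (1 + \<delta>) * c^2"
  proof -
    have "(\<Sum>E\<in>\<Omega>. wt n p E * (Xc n k E)^2)
       = (\<Sum>\<phi>1\<in>I. \<Sum>\<phi>2\<in>I. prob_gnp n p (\<lambda>E. Ev k \<phi>1 E \<and> Ev k \<phi>2 E))"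
      unfolding \<Omega>_def I_def by (rule EX2)
    also have "\<dots> \<le> (\<Sum>\<phi>1\<in>I. \<Sum>\<phi>2\<in>I. \<pi>^2 * gfun p (card (\<phi>1 ` {..<k} \<inter> \<phi>2 ` {..<k})))"
      unfolding \<pi>_def I_def by (intro sum_mono joint_bound p) auto
    also have "\<dots> = (\<Sum>\<phi>1\<in>I. \<pi>^2 * (\<Sum>\<phi>2\<in>I. gfun p (card (\<phi>1 ` {..<k} \<inter> \<phi>2 ` {..<k}))))"
      by (simp add: sum_distrib_left)
    also have "\<dots> \<le> (\<Sum>\<phi>1\<in>I. \<pi>^2 * ((1 + \<delta>) * c))"
      by (intro sum_mono mult_left_mono inner) auto
    also have "\<dots> = \<pi>^2 * (1 + \<delta>) * c^2" unfolding c_def by (simp add: power2_eq_square)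
    finally show ?thesis .
  qed
  define PZ where "PZ = (\<Sum>E\<in>\<Omega>. if Xc n k E > 0 then wt n p E else 0)"
  have wt_nn: "\<And>E. 0 \<le> wt n p E" unfolding wt_def using p q by simp
  have X_nn: "\<And>E. 0 \<le> Xc n k E" unfolding Xc_def by (simp add: sum_nonneg)
  have SM: "(c * \<pi>)^2 \<le> PZ * (\<pi>^2 * (1 + \<delta>) * c^2)"
  proof -
    have "(c * \<pi>)^2 \<le> PZ * (\<Sum>E\<in>\<Omega>. wt n p E * (Xc n k E)^2)"
      unfolding EXv[symmetric] PZ_def by (rule second_moment_ineq) (auto simp: wt_nn X_nn)
    also have "\<dots> \<le> PZ * (\<pi>^2 * (1 + \<delta>) * c^2)"
      by (rule mult_left_mono[OF EX2v]) (unfold PZ_def, intro sum_nonneg, simp add: wt_nn)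
    finally show ?thesis .
  qed
  have PZ_ge: "PZ \<ge> 1 / (1 + \<delta>)"
  proof -
    have pos: "\<pi>^2 * c^2 > 0" using \<pi>pos cpos by simp
    have "(c * \<pi>)^2 = 1 * (\<pi>^2 * c^2)" by (simp add: power_mult_distrib)
    then have "1 * (\<pi>^2 * c^2) \<le> (PZ * (1 + \<delta>)) * (\<pi>^2 * c^2)" using SM by (simp add: mult_ac)
    then have "1 \<le> PZ * (1 + \<delta>)" using pos by (rule mult_right_le_imp_le)
    then show ?thesis using \<delta>0 by (simp add: divide_le_eq mult_ac)
  qed
  have half: "1 / (1 + \<delta>) > 1/2" using delta \<delta>0 unfolding \<delta>_def[symmetric] by (simp add: field_simps)
  let ?B = "\<lambda>E. \<exists>W \<subseteq> {..<n}. card W = k \<and> is_diameter_graph_R2 W E \<and> chromatic_number W E = 3 \<and> connected_induced W E"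
  have incl: "?B E" if E: "E \<in> \<Omega>" "Xc n k E > 0" for E
  proof -
    have "{\<phi>\<in>I. Ev k \<phi> E} \<noteq> {}"
    proof
      assume "{\<phi>\<in>I. Ev k \<phi> E} = {}"
      then have "Xc n k E = 0" unfolding Xc_def I_def by (intro sum.neutral) auto
      then show False using E by simp
    qed
    then obtain \<phi> where \<phi>: "\<phi> \<in> Inj n k" "Ev k \<phi> E" unfolding I_def by auto
    have Esub: "E \<subseteq> all_pairs n" using E unfolding \<Omega>_def by auto
    have G: "is_diameter_graph_R2 (\<phi>`{..<k}) E \<and> chromatic_number (\<phi>`{..<k}) E = 3
     \<and> connected_induced (\<phi>`{..<k}) E"
      by (rule graph_struct[OF k(1) phi_inj[OF \<phi>(1)]]) (rule Ev_edges[OF \<phi>(1) \<phi>(2) Esub])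
    have "\<phi>`{..<k} \<subseteq> {..<n}" using phi_range[OF \<phi>(1)] by auto
    moreover have "card (\<phi>`{..<k}) = k" using card_image[OF phi_inj[OF \<phi>(1)]] by simp
    ultimately show ?thesis using G by blast
  qed
  have "PZ \<le> prob_gnp n p ?B"
    unfolding PZ_def prob_gnp_wt \<Omega>_def[symmetric]
    by (rule sum_mono) (use incl wt_nn in auto)
  then show ?thesis using PZ_ge half by linarith
qed

lemma convex_quad:
  fixes a b :: real and l k :: nat
  assumes "1 \<le> l" "l \<le> k" "0 \<le> b"
  shows "l * a + real l * (real l - 1) / 2 * b \<le> max a (k * a + real k * (real k - 1) / 2 * b)"
proof -
  define h where "h t = t * a + t * (t - 1) / 2 * b" for t :: real
  have k1: "real k \<ge> 1" using assms by simp
  have key: "(real k - 1) * h l \<le> (real k - real l) * h 1 + (real l - 1) * h k"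
  proof -
    have "(real k - real l) * h 1 + (real l - 1) * h k - (real k - 1) * h l
        = b / 2 * ((real k - 1) * (real l - 1) * (real k - real l))"
      unfolding h_def by (simp add: field_simps)
    moreover have "0 \<le> b / 2 * ((real k - 1) * (real l - 1) * (real k - real l))"
      using assms by (intro mult_nonneg_nonneg) auto
    ultimately show ?thesis by linarith
  qed
  have "(real k - real l) * h 1 + (real l - 1) * h k \<le> (real k - real l) * max (h 1) (h k) + (real l - 1) * max (h 1) (h k)"
    using assms by (intro add_mono mult_left_mono) auto
  also have "\<dots> = (real k - 1) * max (h 1) (h k)" by (simp add: algebra_simps)
  finally have fin1: "(real k - 1) * h l \<le> (real k - 1) * max (h 1) (h k)" using key by linarith
  then have "h l \<le> max (h 1) (h k)"
  proof (cases "real k = 1")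
    case True then have "l = 1" using assms by simp
    then show ?thesis by simp
  next
    case False then have "real k - 1 > 0" using k1 by simp
    then show ?thesis using fin1 by (simp add: mult_le_cancel_left_pos)
  qed
  then show ?thesis unfolding h_def by simp
qed

lemma k_exp_le: "real k * exp (- real k) \<le> exp (-1)"
proof -
  have "exp (real k - 1) \<ge> 1 + (real k - 1)" by (rule exp_ge_add_one_self)
  then have "real k \<le> exp (real k - 1)" by simp
  then have "real k * exp (- real k) \<le> exp (real k - 1) * exp (- real k)" by (simp add: mult_right_mono)
  also have "\<dots> = exp (-1)" by (simp add: exp_add[symmetric])
  finally show ?thesis .
qed

lemma delta_lt1:
  fixes n k :: nat and p :: real
  assumes p: "0 < p" "p < 1" and k: "1 \<le> k" "k < n"
    and B1: "real k * (real k ^ 2 / ((real n - real k) * p)) \<le> 1/4"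
    and B2: "ln (real k ^ 2 / ((real n - real k) * p)) + (real k - 1) / 2 * ln (1 / (1 - p)) \<le> -1"
  shows "(\<Sum>l\<in>{1..k}. real (k choose l) * gfun p l * (real k / (real n - real k))^l) < 1"
proof -
  define r where "r = real k ^ 2 / ((real n - real k) * p)"
  define s where "s = ln (1 / (1 - p))"
  have q: "0 < 1 - p" "1 - p < 1" using p by auto
  have s0: "s \<ge> 0" unfolding s_def using q by simp
  have nk: "real n - real k > 0" using k by simp
  have rpos: "r > 0" unfolding r_def using nk p k by simp
  have tm: "real (k choose l) * gfun p l * (real k / (real n - real k))^l
      \<le> exp (l * ln r + real l * (real l - 1) / 2 * s)" if l: "l \<in> {1..k}" for l
  proof -
    have lk: "l \<le> k" using l by simp
    have "real (k choose l) \<le> real k ^ l" using binomial_le_pow[OF lk] by (metis of_nat_le_iff of_nat_power)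
    then have "real (k choose l) * gfun p l * (real k / (real n - real k))^l
        \<le> real k ^ l * gfun p l * (real k / (real n - real k))^l"
      using p q nk by (intro mult_right_mono) (auto simp: gfun_def)
    also have "\<dots> = r ^ l * (1 / (1 - p)) ^ (l choose 2)"
    proof -
      have rl: "r ^ l = real k ^ l * real k ^ l / ((real n - real k) ^ l * p ^ l)"
        unfolding r_def by (simp add: power_divide power_mult_distrib power2_eq_square)
      show ?thesis unfolding rl gfun_def using p q nk by (simp add: power_divide field_simps)
    qed
    also have "\<dots> = exp (l * ln r + real (l choose 2) * s)"
      unfolding s_def using rpos q by (simp add: exp_add exp_of_nat_mult[symmetric] ln_realpow[symmetric]
          exp_ln mult.commute)
    also have "real (l choose 2) = real l * (real l - 1) / 2"
    proof -
      have "even (l * (l - 1))" by (cases "even l") auto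
      then have "real (l * (l - 1) div 2) = real (l * (l - 1)) / 2" by (simp add: real_of_nat_div)
      then show ?thesis using l by (simp add: choose_two of_nat_diff)
    qed
    finally show ?thesis .
  qed
  have termmax: "exp (l * ln r + real l * (real l - 1) / 2 * s) \<le> r + exp (k * (ln r + (real k - 1) / 2 * s))"
    if l: "l \<in> {1..k}" for l
  proof -
    have "l * ln r + real l * (real l - 1) / 2 * s \<le> max (ln r) (k * ln r + real k * (real k - 1) / 2 * s)"
      using convex_quad[of l k s "ln r"] l s0 by simp
    then have "exp (l * ln r + real l * (real l - 1) / 2 * s) \<le> exp (max (ln r) (k * ln r + real k * (real k - 1) / 2 * s))"
      by simp
    also have "\<dots> \<le> exp (ln r) + exp (k * ln r + real k * (real k - 1) / 2 * s)" by (simp add: max_def)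
    also have "exp (ln r) = r" using rpos by simp
    also have "k * ln r + real k * (real k - 1) / 2 * s = k * (ln r + (real k - 1) / 2 * s)" by (simp add: algebra_simps)
    finally show ?thesis .
  qed
  have "(\<Sum>l\<in>{1..k}. real (k choose l) * gfun p l * (real k / (real n - real k))^l)
      \<le> (\<Sum>l\<in>{1..k}. r + exp (k * (ln r + (real k - 1) / 2 * s)))"
    by (rule sum_mono) (use tm termmax in \<open>fastforce\<close>)
  also have "\<dots> = real k * r + real k * exp (k * (ln r + (real k - 1) / 2 * s))" by (simp add: algebra_simps)
  also have "real k * exp (k * (ln r + (real k - 1) / 2 * s)) \<le> real k * exp (- real k)"
  proof -
    have "ln r + (real k - 1) / 2 * s \<le> -1" using B2 unfolding r_def s_def .
    then have "real k * (ln r + (real k - 1) / 2 * s) \<le> real k * (-1)"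
      by (intro mult_left_mono) auto
    then show ?thesis by (intro mult_left_mono) auto
  qed
  also have "\<dots> \<le> exp (-1)" by (rule k_exp_le)
  finally have "(\<Sum>l\<in>{1..k}. real (k choose l) * gfun p l * (real k / (real n - real k))^l) \<le> 1/4 + exp (-1)"
    using B1 unfolding r_def by linarith
  moreover have "exp (-1::real) < 1/2"
  proof -
    have "exp (1::real) \<ge> 1 + 1 + 1^2/2" by (rule exp_lower_Taylor_quadratic) simp
    then have "exp (1::real) > 2" by simp
    then show ?thesis by (simp add: exp_minus field_simps)
  qed
  ultimately show ?thesis by linarith
qed

lemma analytic:
  fixes n :: nat and p \<epsilon> \<epsilon>1 :: real
  assumes eps: "0 < \<epsilon>" "\<epsilon> \<le> 1/2" "\<epsilon> \<le> \<epsilon>1" and p1: "p \<le> 1"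
    and H1: "p * root 4 (real n) / ln (real n) \<ge> 4"
    and H2: "(1 - p) * ln (real n) \<ge> 1"
    and H3: "ln (real n) \<ge> 3" "sqrt (ln (real n)) \<ge> 32/\<epsilon>" "\<epsilon> * ln (real n) \<ge> 40" "real n \<ge> 16"
  shows "0 < p \<and> p < 1 \<and> (\<exists>k::nat. 3 \<le> k \<and> k < n \<and>
    (2 - \<epsilon>1 + 4 * ln p / ln (real n * p)) * log (1 / (1 - p)) (real n * p) \<le> real k \<and>
    real k * (real k ^ 2 / ((real n - real k) * p)) \<le> 1/4 \<and>
    ln (real k ^ 2 / ((real n - real k) * p)) + (real k - 1) / 2 * ln (1 / (1 - p)) \<le> -1)"
proof -
  define x where "x = real n"
  define L where "L = ln x"
  define R where "R = root 4 x"
  have x16: "x \<ge> 16" using H3(4) unfolding x_def .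
  have xpos: "x > 0" using x16 by simp
  have L3: "L \<ge> 3" using H3(1) unfolding L_def x_def .
  have Lpos: "L > 0" using L3 by simp
  have Rpos: "R > 0" unfolding R_def using xpos by simp
  have R4: "R ^ 4 = x" unfolding R_def using xpos by (simp add: real_root_pow_pos)
  have R2: "R \<ge> 2"
  proof -
    have "root 4 16 = (2::real)" by (rule real_root_pos_unique) auto
    then show ?thesis unfolding R_def using x16 by (metis real_root_le_iff zero_less_numeral)
  qed
  have lnR: "ln R = L / 4" unfolding R_def L_def by (simp add: ln_root)
  have pR: "p * R \<ge> 4 * L" using H1 Lpos unfolding R_def[symmetric] x_def[symmetric] L_def[symmetric]
    by (simp add: le_divide_eq)
  have ppos: "p > 0" using pR Lpos Rpos by (smt (verit) mult_nonpos_nonneg)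
  have q: "1 - p > 0" using H2 Lpos unfolding L_def[symmetric] x_def[symmetric]
    by (smt (verit) mult_nonpos_nonneg)
  have plt1: "p < 1" using q by simp
  define lp where "lp = ln p"
  have lp0: "lp \<le> 0" unfolding lp_def using ppos p1 by simp
  have lnL0: "ln L \<ge> 0" using L3 by simp
  have lpL: "lp \<ge> ln 4 + ln L - L/4"
  proof -
    have "4 * L / R \<le> p" using pR Rpos by (simp add: divide_le_eq mult.commute)
    then have "ln (4 * L / R) \<le> ln p" using Lpos Rpos ppos by (subst ln_le_cancel_iff) auto
    moreover have "ln (4 * L / R) = ln 4 + ln L - ln R" using Lpos Rpos by (simp add: ln_div ln_mult)
    ultimately show ?thesis unfolding lp_def lnR by simp
  qed
  have ln4: "ln (4::real) \<ge> 0" by simp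
  have lpL2: "lp \<ge> - L / 4" using lpL ln4 lnL0 by linarith
  define lam where "lam = ln (1 / (1 - p))"
  have lam_eq: "lam = - ln (1 - p)" unfolding lam_def using q by (simp add: ln_div)
  have lam_ge: "lam \<ge> p" using ln_le_minus_one[OF q] lam_eq by simp
  have lampos: "lam > 0" using lam_ge ppos by simp
  have lam_le: "lam \<le> ln L"
  proof -
    have "1 / (1 - p) \<le> L" using H2 q unfolding L_def[symmetric] x_def[symmetric]
      by (simp add: divide_le_eq mult.commute)
    moreover have "0 < 1 / (1 - p)" using q by simp
    ultimately show ?thesis unfolding lam_def using Lpos by (simp only: ln_le_cancel_iff)
  qed
  have lnL_sqrt: "ln L \<le> 2 * sqrt L"
  proof -
    have "ln (sqrt L) \<le> sqrt L - 1" using Lpos by (intro ln_le_minus_one) simp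
    moreover have "ln (sqrt L) = ln L / 2" using Lpos by (simp add: ln_sqrt)
    ultimately show ?thesis by simp
  qed
  have sq: "sqrt L \<ge> 32 / \<epsilon>" using H3(2) unfolding L_def x_def .
  have eL: "\<epsilon> * L \<ge> 40" using H3(3) unfolding L_def x_def .
  have lnL_small: "2 * ln L \<le> \<epsilon> * L / 8"
  proof -
    have "\<epsilon> * sqrt L \<ge> 32" using sq eps by (simp add: divide_le_eq mult.commute)
    then have "\<epsilon> * sqrt L * sqrt L \<ge> 32 * sqrt L" by (rule mult_right_mono) (use Lpos in simp)
    moreover have "sqrt L * sqrt L = L" using Lpos by simp
    ultimately have "\<epsilon> * L \<ge> 32 * sqrt L" by (simp add: mult.assoc)
    then show ?thesis using lnL_sqrt by linarith
  qed
  have lnxp: "ln (x * p) = L + lp" unfolding L_def lp_def using xpos ppos by (simp add: ln_mult)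
  have Llp: "L + lp \<ge> 3/4 * L" using lpL2 by simp
  define A where "A = (2 - \<epsilon>) * (L + lp)"
  define N where "N = A + 4 * lp"
  define b where "b = N / lam"
  have b_eq: "(2 - \<epsilon> + 4 * ln p / ln (real n * p)) * log (1 / (1 - p)) (real n * p) = b"
  proof -
    have nz: "L + lp \<noteq> 0" using Llp Lpos by simp
    have "(2 - \<epsilon> + 4 * ln p / ln (real n * p)) * log (1 / (1 - p)) (real n * p)
        = (2 - \<epsilon> + 4 * lp / (L + lp)) * ((L + lp) / lam)"
      unfolding log_def lam_def[symmetric] x_def[symmetric] lnxp lp_def[symmetric] ..
    also have "\<dots> = N / (L + lp) * ((L + lp) / lam)"
    proof -
      have "2 - \<epsilon> + 4 * lp / (L + lp) = N / (L + lp)" unfolding N_def A_def using nz by (simp add: field_simps)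
      then show ?thesis by simp
    qed
    also have "\<dots> = N / lam" using nz by simp
    finally show ?thesis unfolding b_def .
  qed
  have b1_le: "(2 - \<epsilon>1 + 4 * ln p / ln (real n * p)) * log (1 / (1 - p)) (real n * p) \<le> b"
  proof -
    have G: "log (1 / (1 - p)) (real n * p) \<ge> 0"
      unfolding log_def lam_def[symmetric] x_def[symmetric] lnxp using Llp Lpos lampos by simp
    have "(2 - \<epsilon>1 + 4 * ln p / ln (real n * p)) * log (1 / (1 - p)) (real n * p)
        \<le> (2 - \<epsilon> + 4 * ln p / ln (real n * p)) * log (1 / (1 - p)) (real n * p)"
      using G eps by (intro mult_right_mono) auto
    then show ?thesis unfolding b_eq .
  qed
  have N_lo: "N \<ge> L / 8 + 5.5 * ln L"
  proof -
    have "A \<ge> 3/2 * (L + lp)" unfolding A_def using eps Llp Lpos by (intro mult_right_mono) auto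
    then show ?thesis unfolding N_def using lpL ln4 by argo
  qed
  have N_hi: "N \<le> 2 * L"
  proof -
    have "A \<le> 2 * (L + lp)" unfolding A_def using eps Llp Lpos by (intro mult_right_mono) auto
    then show ?thesis unfolding N_def using lp0 by argo
  qed
  have Npos: "N > 0" using N_lo Lpos lnL0 by linarith
  have b2: "b > 2"
  proof -
    have "2 * lam < N" using N_lo lam_le lnL0 Lpos by linarith
    then show ?thesis unfolding b_def using lampos by (simp add: less_divide_eq)
  qed
  have b_hi: "b \<le> 2 * L / p"
  proof -
    have "N / lam \<le> 2 * L / lam" using N_hi lampos by (simp add: divide_right_mono)
    also have "\<dots> \<le> 2 * L / p" using lam_ge ppos Lpos by (intro divide_left_mono) auto
    finally show ?thesis unfolding b_def .
  qed
  define k where "k = nat \<lceil>b\<rceil>"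
  have kb: "real k \<ge> b" unfolding k_def using b2 by linarith
  have kb1: "real k < b + 1" unfolding k_def using b2 by linarith
  have k3: "k \<ge> 3" unfolding k_def using b2 by linarith
  have Lp1: "L / p \<ge> 1" using L3 p1 ppos by (simp add: le_divide_eq)
  have k_hi: "real k \<le> 3 * L / p" using kb1 b_hi Lp1 by simp
  have kp: "real k * p \<le> 3 * L" using k_hi ppos by (simp add: le_divide_eq)
  have LpR: "L / p \<le> R / 4" using pR ppos by (simp add: divide_le_eq field_simps)
  have k_R: "real k \<le> 3 * R / 4" using k_hi LpR by simp
  have Rx: "3 * R / 4 \<le> x / 2"
  proof -
    have "R ^ 3 \<ge> 2 ^ 3" using R2 by (intro power_mono) auto
    then have "R * R ^ 3 \<ge> R * 8" using Rpos by (simp add: mult_left_mono)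
    moreover have "R * R ^ 3 = x" using R4 by (simp add: power_eq_if)
    ultimately show ?thesis using Rpos by simp
  qed
  have kx: "real k \<le> x / 2" using k_R Rx by simp
  have kn: "k < n" using kx xpos unfolding x_def by simp
  have nk: "real n - real k \<ge> x / 2" using kx unfolding x_def by simp
  have nkpos: "real n - real k > 0" using nk xpos by simp
  have B1: "real k * (real k ^ 2 / ((real n - real k) * p)) \<le> 1/4"
  proof -
    have p4: "p ^ 4 * x \<ge> 256 * L ^ 4"
    proof -
      have "(p * R) ^ 4 \<ge> (4 * L) ^ 4" using pR Lpos by (intro power_mono) auto
      then show ?thesis using R4 by (simp add: power_mult_distrib)
    qed
    have "(real k * p) ^ 3 \<le> (3 * L) ^ 3" using kp ppos by (intro power_mono) auto
    then have k3p: "real k ^ 3 * p ^ 3 \<le> 27 * L ^ 3" by (simp add: power_mult_distrib)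
    have "4 * (real k ^ 3 * p ^ 3) \<le> 108 * L ^ 3" using k3p by argo
    also have "108 * L ^ 3 \<le> 128 * L ^ 4"
    proof -
      have "L ^ 3 \<le> L ^ 4" using L3 by (intro power_increasing) auto
      moreover have "0 \<le> L ^ 3" using Lpos by simp
      ultimately show ?thesis by argo
    qed
    also have "128 * L ^ 4 \<le> (x / 2) * p ^ 4" using p4 by (simp add: mult.commute)
    also have "\<dots> \<le> (real n - real k) * p ^ 4" using nk ppos by (intro mult_right_mono) auto
    finally have "4 * real k ^ 3 * p ^ 3 \<le> ((real n - real k) * p) * p ^ 3" by (simp add: power_eq_if mult_ac)
    then have "4 * real k ^ 3 \<le> (real n - real k) * p" using ppos by (simp add: mult_le_cancel_right)
    moreover have "real k * (real k ^ 2 / ((real n - real k) * p)) = real k ^ 3 / ((real n - real k) * p)"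
      by (simp add: power_eq_if)
    ultimately show ?thesis using nkpos ppos by (simp add: divide_le_eq)
  qed
  have B2: "ln (real k ^ 2 / ((real n - real k) * p)) + (real k - 1) / 2 * lam \<le> -1"
  proof -
    have kpos: "real k > 0" using k3 by simp
    have lnk: "ln (real k) \<le> ln 3 + ln L - lp"
    proof -
      have "ln (real k) \<le> ln (3 * L / p)" using kpos k_hi by simp
      also have "\<dots> = ln 3 + ln L - lp" unfolding lp_def using Lpos ppos by (simp add: ln_div ln_mult)
      finally show ?thesis .
    qed
    have lnnk: "ln (real n - real k) \<ge> L - ln 2"
    proof -
      have "ln (x / 2) \<le> ln (real n - real k)" using nk xpos by simp
      moreover have "ln (x / 2) = L - ln 2" unfolding L_def using xpos by (simp add: ln_div)
      ultimately show ?thesis by simp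
    qed
    have e1: "ln (real k ^ 2 / ((real n - real k) * p)) = 2 * ln (real k) - ln (real n - real k) - lp"
      unfolding lp_def using kpos nkpos ppos by (simp add: ln_div ln_mult ln_realpow)
    have e2: "(real k - 1) * lam \<le> N"
    proof -
      have "(real k - 1) * lam \<le> b * lam" using kb1 lampos by (intro mult_right_mono) auto
      also have "\<dots> = N" unfolding b_def using lampos by simp
      finally show ?thesis .
    qed
    have e3: "- (\<epsilon> / 2) * lp \<le> \<epsilon> * L / 8"
    proof -
      have "\<epsilon> * (- lp) \<le> \<epsilon> * (L / 4)" using lpL2 eps by (intro mult_left_mono) auto
      then show ?thesis by argo
    qed
    have ln3: "ln (3::real) \<le> 2" using ln_le_minus_one[of 3] by simp
    have ln2: "ln (2::real) \<le> 1" using ln_le_minus_one[of 2] by simp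
    have "ln (real k ^ 2 / ((real n - real k) * p)) + (real k - 1) / 2 * lam
       \<le> 2 * (ln 3 + ln L - lp) - (L - ln 2) - lp + N / 2"
    proof -
      have e2': "(real k - 1) / 2 * lam \<le> N / 2" using e2 by simp
      show ?thesis using e1 lnk lnnk e2' by argo
    qed
    also have "\<dots> = 2 * ln 3 + ln 2 + 2 * ln L - (\<epsilon> / 2) * L - (\<epsilon> / 2) * lp"
      unfolding N_def A_def by (simp add: field_simps)
    also have "\<dots> \<le> 2 * ln 3 + ln 2 + \<epsilon> * L / 8 - (\<epsilon> / 2) * L + \<epsilon> * L / 8"
      using lnL_small e3 by argo
    also have "\<dots> \<le> -1" using eL ln3 ln2 by argo
    finally show ?thesis .
  qed
  show ?thesis
    using ppos plt1 k3 kn kb b1_le B1 B2 unfolding lam_def by (intro conjI exI[of _ k]) auto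
qed

lemma prob_pos_ex:
  assumes "prob_gnp n p B > 0"
  shows "\<exists>E. B E"
proof (rule ccontr)
  assume "\<not> (\<exists>E. B E)"
  then have "prob_gnp n p B = 0" unfolding prob_gnp_def by (intro sum.neutral) auto
  then show False using assms by simp
qed

lemma prob_mono:
  assumes "0 \<le> p" "p \<le> 1" "\<And>E. B1 E \<Longrightarrow> B2 E"
  shows "prob_gnp n p B1 \<le> prob_gnp n p B2"
  unfolding prob_gnp_def using assms by (intro sum_mono) auto

lemma u_ge:
  fixes P :: "nat \<Rightarrow> nat set set \<Rightarrow> bool"
  assumes pr: "prob_gnp n p (P k) > 1/2" and k: "0 < k"
    and W: "\<And>k E. P k E \<Longrightarrow> \<exists>W\<subseteq>{..<n}. card W = k"
  shows "k \<le> Max ({k. 0 < k \<and> prob_gnp n p (P k) > 1/2} \<union> {0})"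
proof -
  have sub: "{k. 0 < k \<and> prob_gnp n p (P k) > 1/2} \<subseteq> {..n}"
  proof
    fix k' assume "k' \<in> {k. 0 < k \<and> prob_gnp n p (P k) > 1/2}"
    then have "prob_gnp n p (P k') > 0" by simp
    then obtain E where "P k' E" using prob_pos_ex by blast
    then obtain V where V: "V \<subseteq> {..<n}" "card V = k'" using W by blast
    then have "k' \<le> card {..<n}" using card_mono[of "{..<n}" V] by simp
    then show "k' \<in> {..n}" by simp
  qed
  have fin: "finite ({k. 0 < k \<and> prob_gnp n p (P k) > 1/2} \<union> {0})"
    using finite_subset[OF sub] by simp
  show ?thesis by (rule Max_ge[OF fin]) (use pr k in simp)
qed

lemma main_det:
  fixes n :: nat and p \<epsilon> \<epsilon>1 :: real
  assumes eps: "0 < \<epsilon>" "\<epsilon> \<le> 1/2" "\<epsilon> \<le> \<epsilon>1" and p1: "p \<le> 1"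
    and H1: "p * root 4 (real n) / ln (real n) \<ge> 4"
    and H2: "(1 - p) * ln (real n) \<ge> 1"
    and H3: "ln (real n) \<ge> 3" "sqrt (ln (real n)) \<ge> 32/\<epsilon>" "\<epsilon> * ln (real n) \<ge> 40" "real n \<ge> 16"
  shows "let b = (2 - \<epsilon>1 + 4 * ln p / ln (real n * p)) * log (1 / (1 - p)) (real n * p)
     in real (u2 n p) \<ge> b \<and> real (u2' n p) \<ge> b"
proof -
  obtain k :: nat where p: "0 < p" "p < 1" and k: "3 \<le> k" "k < n"
    and kb: "(2 - \<epsilon>1 + 4 * ln p / ln (real n * p)) * log (1 / (1 - p)) (real n * p) \<le> real k"
    and B1: "real k * (real k ^ 2 / ((real n - real k) * p)) \<le> 1/4"
    and B2: "ln (real k ^ 2 / ((real n - real k) * p)) + (real k - 1) / 2 * ln (1 / (1 - p)) \<le> -1"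
    using analytic[OF eps p1 H1 H2 H3] by blast
  have d: "(\<Sum>l\<in>{1..k}. real (k choose l) * gfun p l * (real k / (real n - real k))^l) < 1"
    by (rule delta_lt1[OF p _ k(2) B1 B2]) (use k in simp)
  have pr: "prob_gnp n p (\<lambda>E. \<exists>W \<subseteq> {..<n}. card W = k \<and> is_diameter_graph_R2 W E
           \<and> chromatic_number W E = 3 \<and> connected_induced W E) > 1/2"
    by (rule prob_main[OF p k d])
  have pr2: "prob_gnp n p (\<lambda>E. \<exists>W \<subseteq> {..<n}. card W = k \<and> is_diameter_graph_R2 W E
           \<and> chromatic_number W E = 3) > 1/2"
  proof -
    have "prob_gnp n p (\<lambda>E. \<exists>W \<subseteq> {..<n}. card W = k \<and> is_diameter_graph_R2 W E
           \<and> chromatic_number W E = 3 \<and> connected_induced W E)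
       \<le> prob_gnp n p (\<lambda>E. \<exists>W \<subseteq> {..<n}. card W = k \<and> is_diameter_graph_R2 W E
           \<and> chromatic_number W E = 3)"
      by (rule prob_mono) (use p in auto)
    then show ?thesis using pr by linarith
  qed
  have k0: "0 < k" using k by simp
  have u1: "k \<le> u2 n p"
    unfolding u2_def
    by (rule u_ge[where P = "\<lambda>k E. \<exists>W \<subseteq> {..<n}. card W = k \<and> is_diameter_graph_R2 W E \<and> chromatic_number W E = 3", OF pr2 k0]) blast
  have u2: "k \<le> u2' n p"
    unfolding u2'_def
    by (rule u_ge[where P = "\<lambda>k E. \<exists>W \<subseteq> {..<n}. card W = k \<and> is_diameter_graph_R2 W E \<and> chromatic_number W E = 3 \<and> connected_induced W E", OF pr k0]) blast
  show ?thesis unfolding Let_def using kb u1 u2 by (smt (verit) of_nat_le_iff)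
qed

theorem theorem17:
  fixes p :: "nat \<Rightarrow> real"
  assumes prob: "\<And>n. 0 \<le> p n \<and> p n \<le> 1"
    and lim1: "filterlim (\<lambda>n. p n * root 4 (real n) / ln (real n)) at_top sequentially"
    and lim2: "filterlim (\<lambda>n. (1 - p n) * ln (real n)) at_top sequentially"
  shows "\<forall>\<epsilon>>0. \<exists>n0. \<forall>n\<ge>n0.
     let b = (2 - \<epsilon> + 4 * ln (p n) / ln (real n * p n)) * log (1 / (1 - p n)) (real n * p n)
     in real (u2 n (p n)) \<ge> b \<and> real (u2' n (p n)) \<ge> b"
proof (intro allI impI)
  fix \<epsilon> :: real assume "\<epsilon> > 0"
  define \<epsilon>0 where "\<epsilon>0 = min \<epsilon> (1/2)"
  have e0: "0 < \<epsilon>0" "\<epsilon>0 \<le> 1/2" "\<epsilon>0 \<le> \<epsilon>" unfolding \<epsilon>0_def using \<open>\<epsilon> > 0\<close> by auto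
  define M where "M = max 3 (max ((32/\<epsilon>0)^2) (40/\<epsilon>0))"
  have ev1: "eventually (\<lambda>n. 4 \<le> p n * root 4 (real n) / ln (real n)) sequentially"
    using lim1 unfolding filterlim_at_top by blast
  have ev2: "eventually (\<lambda>n. 1 \<le> (1 - p n) * ln (real n)) sequentially"
    using lim2 unfolding filterlim_at_top by blast
  have ev3: "eventually (\<lambda>n. real n \<ge> max 16 (exp M)) sequentially"
  proof (rule eventually_sequentiallyI[of "nat \<lceil>max 16 (exp M)\<rceil>"])
    fix n assume "nat \<lceil>max 16 (exp M)\<rceil> \<le> n"
    then show "real n \<ge> max 16 (exp M)" by linarith
  qed
  have H: "ln (real n) \<ge> 3 \<and> sqrt (ln (real n)) \<ge> 32/\<epsilon>0 \<and> \<epsilon>0 * ln (real n) \<ge> 40 \<and> real n \<ge> 16"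
    if n: "real n \<ge> max 16 (exp M)" for n
  proof -
    have npos: "real n > 0" using n by simp
    have "ln (real n) \<ge> M"
    proof -
      have "exp M \<le> real n" using n by simp
      then have "ln (exp M) \<le> ln (real n)" using npos by (subst ln_le_cancel_iff) auto
      then show ?thesis by simp
    qed
    then have L: "ln (real n) \<ge> 3" "ln (real n) \<ge> (32/\<epsilon>0)^2" "ln (real n) \<ge> 40/\<epsilon>0"
      unfolding M_def by auto
    have "sqrt (ln (real n)) \<ge> sqrt ((32/\<epsilon>0)^2)" using L(2) by (rule real_sqrt_le_mono)
    then have s: "sqrt (ln (real n)) \<ge> 32/\<epsilon>0" using e0 by simp
    have "\<epsilon>0 * ln (real n) \<ge> \<epsilon>0 * (40/\<epsilon>0)" using L(3) e0 by (intro mult_left_mono) auto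
    then have e: "\<epsilon>0 * ln (real n) \<ge> 40" using e0 by simp
    show ?thesis using L(1) s e n by simp
  qed
  have "eventually (\<lambda>n. 4 \<le> p n * root 4 (real n) / ln (real n) \<and> 1 \<le> (1 - p n) * ln (real n)
      \<and> real n \<ge> max 16 (exp M)) sequentially"
    using eventually_conj[OF ev1 eventually_conj[OF ev2 ev3]] by simp
  then obtain n0 where n0: "\<And>n. n \<ge> n0 \<Longrightarrow> 4 \<le> p n * root 4 (real n) / ln (real n) \<and> 1 \<le> (1 - p n) * ln (real n)
      \<and> real n \<ge> max 16 (exp M)"
    unfolding eventually_sequentially by blast
  show "\<exists>n0. \<forall>n\<ge>n0.
     let b = (2 - \<epsilon> + 4 * ln (p n) / ln (real n * p n)) * log (1 / (1 - p n)) (real n * p n)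
     in real (u2 n (p n)) \<ge> b \<and> real (u2' n (p n)) \<ge> b"
  proof (intro exI[of _ n0] allI impI)
    fix n assume "n \<ge> n0"
    then have A: "4 \<le> p n * root 4 (real n) / ln (real n)" "1 \<le> (1 - p n) * ln (real n)"
      "real n \<ge> max 16 (exp M)" using n0 by auto
    have HH: "ln (real n) \<ge> 3" "sqrt (ln (real n)) \<ge> 32/\<epsilon>0" "\<epsilon>0 * ln (real n) \<ge> 40" "real n \<ge> 16"
      using H[OF A(3)] by auto
    show "let b = (2 - \<epsilon> + 4 * ln (p n) / ln (real n * p n)) * log (1 / (1 - p n)) (real n * p n)
     in real (u2 n (p n)) \<ge> b \<and> real (u2' n (p n)) \<ge> b"
      by (rule main_det[OF e0 _ A(1) A(2) HH]) (use prob in auto)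
  qed
qed

end
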